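(* Let $\sigma>0$, $T>0$, $Z$ a standard normal random variable, and $v=\exp(-\sigma^2T/2+\sigma\sqrt T Z)$ (so $\mathbb{E}[v]=1$). Let $0<L<1$ and let $\underline v=\underline v(T)$ satisfy $L=\mathbb{E}[v\mid v<\underline v]$. Consider the two-bidder auction: Alice bids knowing only the distribution of $v$; Bob observes $v$ (not Alice's bid) and bids; the highest bid wins and pays its bid (payoff $v$ minus bid) unless it is strictly below $L$, in which case the good is unsold; Bob wins ties, Bob can win with a bid equal to $L$, and a winning bid of Alice equal exactly to $L$ results in no sale. Let $\Pi_B(T)$ be Bob's expected profit in the equilibrium in which Bob bids $\beta_L(v)$ and Alice draws $v'$ independently from the distribution of $v$ and bids $\beta_L(v')$, where $\beta_L(x)=\mathbb{E}[v\mid v<x]$ for $x\ge\underline v$, $\beta_L(x)=L$ for $L<x<\underline v$, and $\beta_L(x)=0$ for $x\le L$. Write $s=\sigma\sqrt T$, $a_\pm=\frac{\ln\underline v}{s}\pm\frac{s}{2}$, $\ell_\pm=\frac{\ln L}{s}\pm\frac{s}{2}$, and $I_k=\int_{\ln\underline v}^\infty \phi\left(\frac{w}{s}+\frac{s}{2}\right)\Phi\left(\frac{w}{s}-\frac{s}{2}\right)w^k\,dw$ for $k=0,2$, where $\Phi,\phi$ are the standard normal CDF and PDF. Then $$\Pi_B(T)=1-\Phi(a_-)\Phi(a_+)-\frac{2}{s}I_0+\Phi(a_-)\Phi(\ell_+)-\Phi(a_+)\Phi(\ell_-),$$ and, taking into account that $\underline v$ depends on $T$, $$\begin{aligned}\Pi_B'(T)&=\Phi(a_-)\frac{\sigma}{\sqrt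 T}\left(\frac{\phi(\ell_+)}{2}+\frac{1}{s}a_-\phi(a_+)\right)+\frac{\sigma\,\underline v\,\phi(a_+)}{2\sqrt T(\underline v-L)}\left(L\Phi(\ell_+)-\Phi(\ell_-)\right)\\&\quad+\frac{1}{2\sqrt2}\frac{\sigma e^{-\sigma^2T/4}}{\sqrt{2\pi}\sqrt T}\left(\frac{\sqrt2}{s}\phi\left(\frac{\sqrt2\ln\underline v}{s}\right)+1-\Phi\left(\frac{\sqrt2\ln\underline v}{s}\right)\right)\\&\quad+\frac{\sigma}{\sqrt T}\left(\frac{1}{\sigma^2T}+\frac14\right)I_0-\frac{\sigma}{\sqrt T}\frac{1}{(\sigma^2T)^2}I_2.\end{aligned}$$
   Context: This models a token whose price follows driftless geometric Brownian motion $dp_t/p_t=\sigma dB_t$ with $p_0=1$; Alice bids at time $0$, Bob at time $T$, and the value to the winner is $v=p_T$. Bidders are risk neutral. *)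

theory Defs
  imports "HOL-Probability.Probability"
begin

definition stdN :: "real measure" where
  "stdN = density lborel std_normal_density"

definition phi :: "real \<Rightarrow> real" where
  "phi x = std_normal_density x"

definition Phi :: "real \<Rightarrow> real" where
  "Phi x = measure stdN {..x}"

definition vT :: "real \<Rightarrow> real \<Rightarrow> real \<Rightarrow> real" where
  "vT \<sigma> T z = exp (- \<sigma>\<^sup>2 * T / 2 + \<sigma> * sqrt T * z)"

definition cond_mean :: "real \<Rightarrow> real \<Rightarrow> real \<Rightarrow> real" where
  "cond_mean \<sigma> T x =
     (\<integral>z. (if vT \<sigma> T z < x then vT \<sigma> T z else 0) \<partial>stdN)
       / measure stdN {z. vT \<sigma> T z < x}"

definition vlow :: "real \<Rightarrow> real \<Rightarrow> real \<Rightarrow> real" where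
  "vlow \<sigma> L T = (THE x. 0 < x \<and> cond_mean \<sigma> T x = L)"

definition betaL :: "real \<Rightarrow> real \<Rightarrow> real \<Rightarrow> real \<Rightarrow> real" where
  "betaL \<sigma> L T x =
     (if x \<le> L then 0
      else if x < vlow \<sigma> L T then L
      else cond_mean \<sigma> T x)"

definition PiB :: "real \<Rightarrow> real \<Rightarrow> real \<Rightarrow> real" where
  "PiB \<sigma> L T =
     (\<integral>zz. (let b = betaL \<sigma> L T (vT \<sigma> T (fst zz));
                 a = betaL \<sigma> L T (vT \<sigma> T (snd zz))
             in if L \<le> b \<and> a \<le> b then vT \<sigma> T (fst zz) - b else 0)
        \<partial>(stdN \<Otimes>\<^sub>M stdN))"

definition Ik :: "real \<Rightarrow> real \<Rightarrow> nat \<Rightarrow> real" where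
  "Ik s vb k = set_lebesgue_integral lborel {ln vb..} (\<lambda>w. phi (w / s + s / 2) * Phi (w / s - s / 2) * w ^ k)"

end

theory Submission
  imports Defs
begin

lemma phi_def': "phi x = exp (-(x^2)/2) / sqrt (2*pi)"
  by (simp add: phi_def std_normal_density_def)

lemma phi_pos: "phi x > 0"
  by (simp add: phi_def')

lemma phi_measurable [measurable]: "phi \<in> borel_measurable borel"
  unfolding phi_def by measurable

lemma DERIV_phi: "(phi has_real_derivative (- x * phi x)) (at x)"
  unfolding phi_def'[abs_def]
  by (auto intro!: derivative_eq_intros simp: field_simps)

lemma isCont_phi: "isCont phi x"
  using DERIV_phi DERIV_isCont by blast

lemma continuous_on_phi: "continuous_on A phi"
  by (simp add: continuous_at_imp_continuous_on isCont_phi)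

lemma prob_space_stdN: "prob_space stdN"
  unfolding stdN_def by (rule prob_space_normal_density) simp

lemma sets_stdN [measurable_cong, simp]: "sets stdN = sets borel"
  by (simp add: stdN_def)

lemma space_stdN [simp]: "space stdN = UNIV"
  by (simp add: stdN_def)

lemma real_distribution_stdN: "real_distribution stdN"
  unfolding real_distribution_def real_distribution_axioms_def
  using prob_space_stdN by simp

lemma Phi_cdf: "Phi = cdf stdN"
  by (simp add: Phi_def[abs_def] cdf_def)

lemma integrable_stdN_iff:
  "f \<in> borel_measurable borel \<Longrightarrow> integrable stdN f \<longleftrightarrow> integrable lborel (\<lambda>x. phi x * f x)"
  unfolding stdN_def phi_def
  by (subst integrable_density) auto

lemma integral_stdN:
  "f \<in> borel_measurable borel \<Longrightarrow> integral\<^sup>L stdN f = (\<integral>x. phi x * f x \<partial>lborel)"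
  unfolding stdN_def phi_def
  by (subst integral_density) auto

lemma measure_stdN: "A \<in> sets borel \<Longrightarrow> measure stdN A = (LINT x:A|lborel. phi x)"
proof -
  assume A: "A \<in> sets borel"
  have "measure stdN A = integral\<^sup>L stdN (indicator A)"
    using A by simp
  also have "\<dots> = (LINT x:A|lborel. phi x)"
    using A by (subst integral_stdN) (auto simp: set_lebesgue_integral_def mult.commute)
  finally show ?thesis .
qed

lemma integrable_phi: "integrable lborel phi"
  unfolding phi_def by simp

lemma Phi_diff: "a \<le> b \<Longrightarrow> Phi b - Phi a = integral {a..b} phi"
proof -
  assume ab: "a \<le> b"
  interpret real_distribution stdN by (rule real_distribution_stdN)
  have "Phi b - Phi a = measure stdN {a<..b}"
  proof (cases "a = b")
    case False thus ?thesis using ab unfolding Phi_cdf by (intro cdf_diff_eq) auto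
  qed simp
  also have "\<dots> = (LINT x:{a<..b}|lborel. phi x)" by (rule measure_stdN) simp
  also have "\<dots> = integral {a<..b} phi"
    by (rule set_borel_integral_eq_integral)
       (use integrable_mult_indicator[of "{a<..b}" lborel phi] integrable_phi in \<open>auto simp: set_integrable_def\<close>)
  also have "\<dots> = integral {a..b} phi"
    by (rule integral_spike_set) (auto intro: negligible_subset[of "{a}"] simp: )
  finally show ?thesis .
qed

lemma DERIV_Phi: "(Phi has_real_derivative phi x) (at x)"
proof -
  have "((\<lambda>y. integral {x-1..y} phi) has_real_derivative phi x) (at x within {x-1..x+1})"
    by (rule integral_has_real_derivative) (auto intro: continuous_on_phi)
  then have d: "((\<lambda>y. integral {x-1..y} phi) has_real_derivative phi x) (at x)"
    by (simp add: at_within_Icc_at)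
  have ev: "\<forall>\<^sub>F y in nhds x. Phi y = Phi (x-1) + integral {x-1..y} phi"
    using eventually_nhds_in_open[of "{x-1<..}" x]
    by (auto elim!: eventually_mono intro!: simp: Phi_diff[symmetric])
  show ?thesis
    by (subst DERIV_cong_ev[OF refl ev refl]) (auto intro!: derivative_eq_intros d)
qed

lemma ftc_Ici:
  fixes f F :: "real \<Rightarrow> real"
  assumes der: "\<And>x. a \<le> x \<Longrightarrow> (F has_real_derivative f x) (at x)"
    and cont: "\<And>x. a \<le> x \<Longrightarrow> isCont f x"
    and int: "set_integrable lborel {a..} f"
    and lim: "(F \<longlongrightarrow> l) at_top"
  shows "(LINT x:{a..}|lborel. f x) = l - F a"
proof -
  have int': "set_integrable lborel (einterval (ereal a) \<infinity>) f"
    by (rule set_integrable_subset[OF int]) auto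
  have "(LBINT x=ereal a..\<infinity>. f x) = l - F a"
  proof (rule interval_integral_FTC_integrable)
    show "((F \<circ> real_of_ereal) \<longlongrightarrow> F a) (at_right (ereal a))"
      unfolding ereal_tendsto_simps1
      by (metis DERIV_isCont der isCont_def filterlim_at_split order_refl)
    show "((F \<circ> real_of_ereal) \<longlongrightarrow> l) (at_left \<infinity>)"
      unfolding ereal_tendsto_simps1 by (rule lim)
  qed (use int' der cont in \<open>auto simp: has_real_derivative_iff_has_vector_derivative[symmetric]\<close>)
  then have "(LINT x:{a<..}|lborel. f x) = l - F a"
    by (simp add: interval_integral_to_infinity_eq)
  moreover have "(LINT x:{a..}|lborel. f x) = (LINT x:{a<..}|lborel. f x)"
    by (rule set_integral_cong_set)
       (use int int' in \<open>auto intro!: eventually_mono[OF AE_lborel_singleton[of a]] 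
         simp: set_integrable_def set_borel_measurable_def\<close>)
  ultimately show ?thesis by simp
qed

lemma ftc_Iic:
  fixes f F :: "real \<Rightarrow> real"
  assumes der: "\<And>x. x \<le> a \<Longrightarrow> (F has_real_derivative f x) (at x)"
    and cont: "\<And>x. x \<le> a \<Longrightarrow> isCont f x"
    and int: "set_integrable lborel {..a} f"
    and lim: "(F \<longlongrightarrow> l) at_bot"
  shows "(LINT x:{..a}|lborel. f x) = F a - l"
proof -
  have int': "set_integrable lborel (einterval (-\<infinity>) (ereal a)) f"
    by (rule set_integrable_subset[OF int]) auto
  have "(LBINT x=-\<infinity>..ereal a. f x) = F a - l"
  proof (rule interval_integral_FTC_integrable)
    show "((F \<circ> real_of_ereal) \<longlongrightarrow> F a) (at_left (ereal a))"
      unfolding ereal_tendsto_simps1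
      by (metis DERIV_isCont der isCont_def filterlim_at_split order_refl)
    show "((F \<circ> real_of_ereal) \<longlongrightarrow> l) (at_right (-\<infinity>))"
      unfolding ereal_tendsto_simps1 by (rule lim)
  qed (use int' der cont in \<open>auto simp: has_real_derivative_iff_has_vector_derivative[symmetric]\<close>)
  then have "(LINT x:{..<a}|lborel. f x) = F a - l"
    by (simp add: interval_lebesgue_integral_def einterval_def lessThan_def)
  moreover have "(LINT x:{..a}|lborel. f x) = (LINT x:{..<a}|lborel. f x)"
    by (rule set_integral_cong_set)
       (use int int' in \<open>auto intro!: eventually_mono[OF AE_lborel_singleton[of a]] 
         simp: set_integrable_def set_borel_measurable_def\<close>)
  ultimately show ?thesis by simp
qed

lemma set_integrable_bound:
  fixes f g :: "real \<Rightarrow> real"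
  assumes "integrable lborel g" "f \<in> borel_measurable borel" "A \<in> sets borel"
    "\<And>x. \<bar>f x\<bar> \<le> g x"
  shows "set_integrable lborel A f"
  unfolding set_integrable_def
proof (rule Bochner_Integration.integrable_bound[OF assms(1)])
  show "(\<lambda>x. indicator A x *\<^sub>R f x) \<in> borel_measurable lborel"
    using assms(2,3) by measurable
  show "AE x in lborel. norm (indicator A x *\<^sub>R f x) \<le> norm (g x)"
  proof (intro AE_I2)
    fix x
    have "\<bar>f x\<bar> \<le> g x" by (rule assms(4))
    then show "norm (indicator A x *\<^sub>R f x) \<le> norm (g x)"
      by (auto simp: indicator_def)
  qed
qed

lemma Phi_strict_mono: "a < b \<Longrightarrow> Phi a < Phi b"
  by (rule DERIV_pos_imp_increasing[of a b Phi]) (use DERIV_Phi phi_pos in blast)+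

lemma Phi_mono: "a \<le> b \<Longrightarrow> Phi a \<le> Phi b"
  using Phi_strict_mono[of a b] by (cases "a = b") auto

lemma Phi_less_iff [simp]: "Phi a < Phi b \<longleftrightarrow> a < b"
  by (metis Phi_mono Phi_strict_mono linorder_not_le)

lemma Phi_le_iff [simp]: "Phi a \<le> Phi b \<longleftrightarrow> a \<le> b"
  by (meson Phi_less_iff linorder_not_le)

lemma Phi_eq_iff [simp]: "Phi a = Phi b \<longleftrightarrow> a = b"
  by (metis Phi_less_iff linorder_neq_iff)

lemma Phi_nonneg: "0 \<le> Phi x"
  unfolding Phi_def by simp

lemma Phi_le_1: "Phi x \<le> 1"
  using real_distribution.cdf_bounded_prob[OF real_distribution_stdN] by (simp add: Phi_cdf)

lemma Phi_pos: "0 < Phi x"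
  using Phi_nonneg[of "x-1"] Phi_strict_mono[of "x-1" x] by linarith

lemma Phi_less_1: "Phi x < 1"
  using Phi_le_1[of "x+1"] Phi_strict_mono[of x "x+1"] by linarith

lemma Phi_at_top: "(Phi \<longlongrightarrow> 1) at_top"
  using real_distribution.cdf_lim_at_top_prob[OF real_distribution_stdN] by (simp add: Phi_cdf)

lemma Phi_at_bot: "(Phi \<longlongrightarrow> 0) at_bot"
  using finite_borel_measure.cdf_lim_at_bot[OF real_distribution.finite_borel_measure_M[OF real_distribution_stdN]]
  by (simp add: Phi_cdf)

lemma isCont_Phi: "isCont Phi x"
  using DERIV_Phi DERIV_isCont by blast

lemma continuous_on_Phi: "continuous_on A Phi"
  by (simp add: continuous_at_imp_continuous_on isCont_Phi)

lemma Phi_measurable [measurable]: "Phi \<in> borel_measurable borel"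
  by (intro borel_measurable_continuous_onI continuous_on_Phi)

lemma phi_shift: "exp (s * z - s^2/2) * phi z = phi (z - s)"
  unfolding phi_def' by (simp add: exp_add[symmetric] power2_eq_square field_simps)

lemma phi_le: "phi x \<le> 1 / sqrt (2*pi)"
  unfolding phi_def' by (simp add: divide_right_mono)

lemma lin_at_bot: fixes s c :: real assumes "s > 0" shows "filterlim (\<lambda>t. s * t + c) at_bot at_bot"
proof -
  have "filterlim (\<lambda>t. s * t) at_bot at_bot"
    by (rule filterlim_tendsto_pos_mult_at_bot[of "\<lambda>_. s" s]) (auto simp: assms filterlim_ident)
  then have "filterlim (\<lambda>t. c + s * t) at_bot at_bot"
    using filterlim_tendsto_add_at_bot_iff[of "\<lambda>_. c" c at_bot "\<lambda>t. s * t"] by simp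
  then show ?thesis by (simp add: add.commute)
qed

lemma lin_at_top: fixes s c :: real assumes "s > 0" shows "filterlim (\<lambda>t. s * t + c) at_top at_top"
proof -
  have "filterlim (\<lambda>t. s * t) at_top at_top"
    by (rule filterlim_tendsto_pos_mult_at_top[of "\<lambda>_. s" s]) (auto simp: assms filterlim_ident)
  then have "filterlim (\<lambda>t. c + s * t) at_top at_top"
    using filterlim_tendsto_add_at_top_iff[of "\<lambda>_. c" c at_top "\<lambda>t. s * t"] by simp
  then show ?thesis by (simp add: add.commute)
qed

lemma shift_at_bot: "filterlim (\<lambda>z::real. z - s) at_bot at_bot"
  using lin_at_bot[of 1 "-s"] by simp

lemma shift_at_top: "filterlim (\<lambda>z::real. z - s) at_top at_top"
  using lin_at_top[of 1 "-s"] by simp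

lemma exp_lin_at_bot: "(s::real) > 0 \<Longrightarrow> ((\<lambda>t. exp (s * t - c)) \<longlongrightarrow> 0) at_bot"
  using filterlim_compose[OF exp_at_bot lin_at_bot[of s "-c"]] by simp

lemma DERIV_Phi_comp [derivative_intros]:
  "(g has_real_derivative g') (at x within A) \<Longrightarrow> ((\<lambda>x. Phi (g x)) has_real_derivative phi (g x) * g') (at x within A)"
  by (rule DERIV_chain2[OF DERIV_Phi])

lemma DERIV_phi_comp [derivative_intros]:
  "(g has_real_derivative g') (at x within A) \<Longrightarrow> ((\<lambda>x. phi (g x)) has_real_derivative (- g x * phi (g x)) * g') (at x within A)"
  by (rule DERIV_chain2[OF DERIV_phi])

lemma phi_shift_nd: "phi (z - s) = normal_density s 1 z"
  by (simp add: phi_def normal_density_def)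

lemma integrable_phi_shift: "integrable lborel (\<lambda>z. phi (z - s))"
  unfolding phi_shift_nd by simp

lemma int_phi_shift_Iic: "(LINT z:{..t}|lborel. phi (z - s)) = Phi (t - s)"
proof -
  have "(LINT z:{..t}|lborel. phi (z - s)) = Phi (t - s) - 0"
  proof (rule ftc_Iic)
    show "((\<lambda>z. Phi (z - s)) has_real_derivative phi (x - s)) (at x)" for x
      by (auto intro!: derivative_eq_intros)
    show "isCont (\<lambda>z. phi (z - s)) x" for x
      by (intro continuous_intros isCont_o2[OF _ isCont_phi])
    show "set_integrable lborel {..t} (\<lambda>z. phi (z - s))"
      by (rule set_integrable_bound[OF integrable_phi_shift]) (auto simp: abs_of_pos phi_pos)
    show "((\<lambda>z. Phi (z - s)) \<longlongrightarrow> 0) at_bot"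
      by (rule filterlim_compose[OF Phi_at_bot shift_at_bot])
  qed
  then show ?thesis by simp
qed

lemma int_phi_shift_Iio: "(LINT z:{..<t}|lborel. phi (z - s)) = Phi (t - s)"
proof -
  have "(LINT z:{..<t}|lborel. phi (z - s)) = (LINT z:{..t}|lborel. phi (z - s))"
    by (rule set_integral_cong_set)
       (auto intro!: eventually_mono[OF AE_lborel_singleton[of t]] simp: set_borel_measurable_def)
  then show ?thesis using int_phi_shift_Iic by simp
qed

lemma Phi_Iio: "measure stdN {..<t} = Phi t"
  using int_phi_shift_Iio[of t 0] by (simp add: measure_stdN)

definition rr :: "real \<Rightarrow> real \<Rightarrow> real" where
  "rr s z = Phi (z - s) / Phi z"

lemma Phi_shift_lt:
  assumes s: "s > 0"
  shows "Phi (t - s) < exp (s * t - s^2/2) * Phi t"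
proof -
  let ?h = "\<lambda>t. exp (s * t - s^2/2) * Phi t - Phi (t - s)"
  have "0 < ?h t"
  proof (rule DERIV_pos_imp_increasing_at_bot[where f = ?h and b = t])
    fix x assume "x \<le> t"
    have "(?h has_real_derivative (s * exp (s * x - s^2/2) * Phi x + exp (s * x - s^2/2) * phi x - phi (x - s))) (at x)"
      by (auto intro!: derivative_eq_intros)
    moreover have "s * exp (s * x - s^2/2) * Phi x + exp (s * x - s^2/2) * phi x - phi (x - s)
        = s * exp (s * x - s^2/2) * Phi x"
      using phi_shift[of s x] by simp
    moreover have "s * exp (s * x - s^2/2) * Phi x > 0"
      using s Phi_pos by simp
    ultimately show "\<exists>y. (?h has_real_derivative y) (at x) \<and> 0 < y" by auto
  next
    have e: "((\<lambda>t. exp (s * t - s^2/2)) \<longlongrightarrow> 0) at_bot" using s by (rule exp_lin_at_bot)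
    have p: "((\<lambda>t. Phi (t - s)) \<longlongrightarrow> 0) at_bot"
      by (rule filterlim_compose[OF Phi_at_bot shift_at_bot])
    show "(?h \<longlongrightarrow> 0) at_bot"
      using tendsto_diff[OF tendsto_mult[OF e Phi_at_bot] p] by simp
  qed
  then show ?thesis by simp
qed

lemma rr_less: "s > 0 \<Longrightarrow> rr s z < exp (s * z - s^2/2)"
  unfolding rr_def using Phi_shift_lt[of s z] Phi_pos[of z]
  by (simp add: divide_less_eq)

lemma DERIV_rr:
  "(rr s has_real_derivative ((phi (z - s) * Phi z - Phi (z - s) * phi z) / (Phi z)^2)) (at z)"
  unfolding rr_def[abs_def]
  using Phi_pos[of z]
  by (auto intro!: derivative_eq_intros simp: power2_eq_square)

lemma rr_strict_mono:
  assumes s: "s > 0" and ab: "a < b"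
  shows "rr s a < rr s b"
proof (rule DERIV_pos_imp_increasing[OF ab])
  fix x
  have "phi (x - s) * Phi x - Phi (x - s) * phi x = phi x * (exp (s * x - s^2/2) * Phi x - Phi (x - s))"
    using phi_shift[of s x] by (simp add: algebra_simps)
  also have "\<dots> > 0" using Phi_shift_lt[OF s, of x] phi_pos[of x] by simp
  finally have "(phi (x - s) * Phi x - Phi (x - s) * phi x) / (Phi x)^2 > 0"
    using Phi_pos[of x] by simp
  then show "\<exists>y. (rr s has_real_derivative y) (at x) \<and> 0 < y"
    using DERIV_rr by blast
qed

lemma rr_less_iff: "s > 0 \<Longrightarrow> rr s a < rr s b \<longleftrightarrow> a < b"
  by (metis linorder_neq_iff order.asym rr_strict_mono)

lemma rr_le_iff: "s > 0 \<Longrightarrow> rr s a \<le> rr s b \<longleftrightarrow> a \<le> b"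
  by (meson linorder_not_le rr_less_iff)

lemma isCont_rr: "isCont (rr s) z"
  using DERIV_rr DERIV_isCont by blast

lemma rr_at_top: "(rr s \<longlongrightarrow> 1) at_top"
proof -
  have p: "((\<lambda>t. Phi (t - s)) \<longlongrightarrow> 1) at_top"
    by (rule filterlim_compose[OF Phi_at_top shift_at_top])
  show ?thesis unfolding rr_def[abs_def]
    using tendsto_divide[OF p Phi_at_top] by simp
qed

lemma rr_pos: "0 < rr s z"
  unfolding rr_def using Phi_pos by simp

lemma rr_less_1: "s > 0 \<Longrightarrow> rr s z < 1"
  unfolding rr_def using Phi_pos[of z] by (simp add: divide_less_eq)

definition zbar :: "real \<Rightarrow> real \<Rightarrow> real" where
  "zbar L s = (THE z. rr s z = L)"

lemma zbar_exists:
  assumes s: "s > 0" and L: "0 < L" "L < 1"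
  shows "\<exists>z. rr s z = L"
proof -
  define lp where "lp = (ln L + s^2/2) / s"
  have "exp (s * lp - s^2/2) = L" using s L by (simp add: lp_def)
  then have 1: "rr s lp < L" using rr_less[OF s, of lp] by simp
  have "\<forall>\<^sub>F z in at_top. rr s z > L"
    using order_tendstoD(1)[OF rr_at_top L(2)] .
  then obtain N where N: "\<And>z. z \<ge> N \<Longrightarrow> rr s z > L"
    by (auto simp: eventually_at_top_linorder)
  have 2: "rr s (max N lp) > L" using N by simp
  have "\<exists>z. lp \<le> z \<and> z \<le> max N lp \<and> rr s z = L"
    using 1 2 by (intro IVT') (auto intro: continuous_at_imp_continuous_on isCont_rr)
  then show ?thesis by blast
qed

lemma rr_inj: "s > 0 \<Longrightarrow> rr s a = rr s b \<Longrightarrow> a = b"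
  using rr_strict_mono[of s a b] rr_strict_mono[of s b a] by (cases a b rule: linorder_cases) auto

lemma zbar:
  assumes s: "s > 0" and L: "0 < L" "L < 1"
  shows "rr s (zbar L s) = L"
proof -
  obtain z where z: "rr s z = L" using zbar_exists[OF assms] by blast
  have "zbar L s = z" unfolding zbar_def
    by (rule the_equality) (use z rr_inj[OF s] in auto)
  then show ?thesis using z by simp
qed

lemma zbar_unique:
  assumes s: "s > 0" and L: "0 < L" "L < 1" and "rr s z = L"
  shows "z = zbar L s"
  using zbar[OF s L] assms(4) rr_inj[OF s] by simp

lemma vT_eq: "T \<ge> 0 \<Longrightarrow> vT \<sigma> T z = exp (\<sigma> * sqrt T * z - (\<sigma> * sqrt T)^2/2)"
  by (simp add: vT_def power_mult_distrib algebra_simps)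

lemma vT_measurable [measurable]: "vT \<sigma> T \<in> borel_measurable borel"
  unfolding vT_def[abs_def] by measurable

lemma exp_lt_iff_z:
  fixes s x z :: real
  assumes s: "s > 0" and x: "x > 0"
  shows "exp (s * z - s^2/2) < x \<longleftrightarrow> z < ln x / s + s/2"
proof -
  have "exp (s * z - s^2/2) < x \<longleftrightarrow> s * z - s^2/2 < ln x"
    using x exp_less_cancel_iff[of "s * z - s^2/2" "ln x"] by simp
  also have "\<dots> \<longleftrightarrow> z < ln x / s + s/2"
    using s by (simp add: field_simps power2_eq_square)
  finally show ?thesis .
qed

lemma exp_le_iff_z:
  fixes s x z :: real
  assumes s: "s > 0" and x: "x > 0"
  shows "exp (s * z - s^2/2) \<le> x \<longleftrightarrow> z \<le> ln x / s + s/2"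
proof -
  have "exp (s * z - s^2/2) \<le> x \<longleftrightarrow> s * z - s^2/2 \<le> ln x"
    using x exp_le_cancel_iff[of "s * z - s^2/2" "ln x"] by simp
  also have "\<dots> \<longleftrightarrow> z \<le> ln x / s + s/2"
    using s by (simp add: field_simps power2_eq_square)
  finally show ?thesis .
qed

lemma cond_mean_eq:
  assumes \<sigma>: "\<sigma> > 0" and T: "T > 0" and x: "x > 0"
  shows "cond_mean \<sigma> T x = rr (\<sigma> * sqrt T) (ln x / (\<sigma> * sqrt T) + \<sigma> * sqrt T / 2)"
proof -
  define s where "s = \<sigma> * sqrt T"
  have s: "s > 0" using \<sigma> T by (simp add: s_def)
  define t where "t = ln x / s + s / 2"
  have v: "vT \<sigma> T z = exp (s * z - s^2/2)" for z
    using T by (simp add: vT_eq s_def)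
  have set: "{z. vT \<sigma> T z < x} = {..<t}"
    using exp_lt_iff_z[OF s x] by (auto simp: v t_def)
  have den: "measure stdN {z. vT \<sigma> T z < x} = Phi t"
    unfolding set by (rule Phi_Iio)
  have "(\<integral>z. (if vT \<sigma> T z < x then vT \<sigma> T z else 0) \<partial>stdN)
      = (\<integral>z. phi z * (if vT \<sigma> T z < x then vT \<sigma> T z else 0) \<partial>lborel)"
    by (rule integral_stdN) measurable
  also have "\<dots> = (LINT z:{..<t}|lborel. phi (z - s))"
    unfolding set_lebesgue_integral_def
  proof (rule Bochner_Integration.integral_cong[OF refl])
    fix z
    have "(vT \<sigma> T z < x) = (z < t)" using set by auto
    then show "phi z * (if vT \<sigma> T z < x then vT \<sigma> T z else 0) = indicator {..<t} z *\<^sub>R phi (z - s)"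
      using phi_shift[of s z] by (auto simp: v indicator_def mult.commute)
  qed
  also have "\<dots> = Phi (t - s)" by (rule int_phi_shift_Iio)
  finally show ?thesis
    unfolding cond_mean_def den by (simp add: rr_def t_def s_def)
qed

lemma vlow_eq:
  assumes \<sigma>: "\<sigma> > 0" and T: "T > 0" and L: "0 < L" "L < 1"
  shows "vlow \<sigma> L T = exp (\<sigma> * sqrt T * zbar L (\<sigma> * sqrt T) - (\<sigma> * sqrt T)^2/2)"
proof -
  define s where "s = \<sigma> * sqrt T"
  have s: "s > 0" using \<sigma> T by (simp add: s_def)
  define zb where "zb = zbar L s"
  have zb: "rr s zb = L" using zbar[OF s L] by (simp add: zb_def)
  define x0 where "x0 = exp (s * zb - s^2/2)"
  have lnx0: "ln x0 / s + s / 2 = zb"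
    using s by (simp add: x0_def field_simps power2_eq_square)
  have "vlow \<sigma> L T = x0" unfolding vlow_def
  proof (rule the_equality)
    show "0 < x0 \<and> cond_mean \<sigma> T x0 = L"
      using cond_mean_eq[OF \<sigma> T, of x0] lnx0 zb by (simp add: x0_def s_def[symmetric])
  next
    fix x assume "0 < x \<and> cond_mean \<sigma> T x = L"
    then have x: "x > 0" and "rr s (ln x / s + s/2) = L"
      using cond_mean_eq[OF \<sigma> T, of x] by (auto simp: s_def)
    then have "ln x / s + s/2 = zb" using zbar_unique[OF s L] zb_def by blast
    then have "ln x = s * zb - s^2/2" using s by (simp add: field_simps power2_eq_square)
    then show "x = x0" using x by (metis exp_ln x0_def)
  qed
  then show ?thesis by (simp add: x0_def zb_def s_def)
qed

lemma betaL_vT: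
  assumes \<sigma>: "\<sigma> > 0" and T: "T > 0" and L: "0 < L" "L < 1"
  defines "s \<equiv> \<sigma> * sqrt T"
  shows "betaL \<sigma> L T (vT \<sigma> T z) =
    (if z \<le> ln L / s + s/2 then 0 else if z < zbar L s then L else rr s z)"
proof -
  have s: "s > 0" using \<sigma> T by (simp add: s_def)
  have v: "vT \<sigma> T z = exp (s * z - s^2/2)"
    using T by (simp add: vT_eq s_def)
  have vl: "vlow \<sigma> L T = exp (s * zbar L s - s^2/2)"
    using vlow_eq[OF \<sigma> T L] by (simp add: s_def)
  have 1: "vT \<sigma> T z \<le> L \<longleftrightarrow> z \<le> ln L / s + s/2"
    unfolding v by (rule exp_le_iff_z[OF s L(1)])
  have 2: "vT \<sigma> T z < vlow \<sigma> L T \<longleftrightarrow> z < zbar L s"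
    unfolding v vl by (simp add: s)
  have 3: "cond_mean \<sigma> T (vT \<sigma> T z) = rr s z"
    using cond_mean_eq[OF \<sigma> T, of "vT \<sigma> T z"] s
    by (simp add: v s_def[symmetric] field_simps power2_eq_square)
  show ?thesis unfolding betaL_def 1 2 3 by simp
qed

definition KK :: "real \<Rightarrow> real \<Rightarrow> real" where
  "KK s a = (LINT z:{a..}|lborel. phi z * Phi (z - s))"

lemma pair_stdN: "pair_sigma_finite stdN stdN"
  unfolding pair_sigma_finite_def using prob_space_stdN prob_space_imp_sigma_finite by auto

lemma integrable_phi_bound: "integrable lborel (\<lambda>z. c * (phi (z - s) + phi z))"
  using integrable_phi_shift[of s] integrable_phi by auto

lemma ftc_Ioo:
  fixes f F :: "real \<Rightarrow> real"
  assumes ab: "a \<le> b"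
    and der: "\<And>x. a \<le> x \<Longrightarrow> x \<le> b \<Longrightarrow> (F has_real_derivative f x) (at x)"
    and cont: "\<And>x. a \<le> x \<Longrightarrow> x \<le> b \<Longrightarrow> isCont f x"
  shows "(LINT x:{a<..<b}|lborel. f x) = F b - F a"
proof -
  have "(LINT x:{a<..<b}|lborel. f x) = (LBINT x=ereal a..ereal b. f x)"
    using ab by (simp add: interval_integral_Ioo)
  also have "\<dots> = F b - F a"
    using ab der cont
    by (intro interval_integral_FTC_finite)
       (auto simp: has_real_derivative_iff_has_vector_derivative[symmetric] min_def max_def
             intro: continuous_at_imp_continuous_on has_field_derivative_at_within)
  finally show ?thesis .
qed

lemma payoff_eq:
  assumes \<sigma>: "\<sigma> > 0" and T: "T > 0" and L: "0 < L" "L < 1"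
  defines "s \<equiv> \<sigma> * sqrt T"
  defines "zb \<equiv> zbar L s" and "lp \<equiv> ln L / s + s/2"
  shows "(let b = betaL \<sigma> L T (vT \<sigma> T z); a = betaL \<sigma> L T (vT \<sigma> T z')
          in if L \<le> b \<and> a \<le> b then vT \<sigma> T z - b else 0)
       = (if lp < z \<and> z < zb then exp (s * z - s^2/2) - L else 0) * (if z' \<le> zb then 1 else 0)
       + (if zb \<le> z then exp (s * z - s^2/2) - rr s z else 0) * (if z' \<le> z then 1 else 0)"
proof -
  have s: "s > 0" using \<sigma> T by (simp add: s_def)
  have v: "vT \<sigma> T y = exp (s * y - s^2/2)" for y
    using T by (simp add: vT_eq s_def)
  have zb: "rr s zb = L" using zbar[OF s L] by (simp add: zb_def)
  have "exp (s * lp - s^2/2) = L" using s L by (simp add: lp_def field_simps power2_eq_square)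
  then have "rr s lp < L" using rr_less[OF s, of lp] by simp
  then have lpzb: "lp < zb" using zb rr_less_iff[OF s] by metis
  have b: "betaL \<sigma> L T (vT \<sigma> T y) = (if y \<le> lp then 0 else if y < zb then L else rr s y)" for y
    using betaL_vT[OF \<sigma> T L, of y] by (simp add: s_def zb_def lp_def)
  have r1: "rr s y \<le> L \<longleftrightarrow> y \<le> zb" for y using rr_le_iff[OF s, of y zb] zb by simp
  have r2: "L \<le> rr s y \<longleftrightarrow> zb \<le> y" for y using rr_le_iff[OF s, of zb y] zb by simp
  have r3: "rr s y \<le> rr s y' \<longleftrightarrow> y \<le> y'" for y y' using rr_le_iff[OF s] by simp
  have r4: "rr s y < L \<longleftrightarrow> y < zb" for y using r2[of y] by linarith
  have r5: "L < rr s y \<longleftrightarrow> zb < y" for y using r1[of y] by linarith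
  have r6: "rr s y < rr s y' \<longleftrightarrow> y < y'" for y y' using r3[of y' y] by linarith
  show ?thesis
    unfolding Let_def b
    using lpzb L rr_pos[of s] r1 r2 r3 r4 r5 r6 zb
    by (auto simp: v not_le not_less dest: order.strict_trans[OF rr_pos])
qed

lemma lp_less_zb:
  assumes s: "s > 0" and L: "0 < L" "L < 1"
  shows "ln L / s + s/2 < zbar L s"
proof -
  have "exp (s * (ln L / s + s/2) - s^2/2) = L" using s L by (simp add: field_simps power2_eq_square)
  then have "rr s (ln L / s + s/2) < L" using rr_less[OF s, of "ln L / s + s/2"] by simp
  then show ?thesis using zbar[OF s L] rr_less_iff[OF s] by metis
qed

lemma rr_measurable [measurable]: "rr s \<in> borel_measurable borel"
  unfolding rr_def[abs_def] by measurable

lemma si_phi_shift_Phi: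
  assumes [measurable]: "g \<in> borel_measurable borel" and A: "A \<in> sets borel"
  shows "set_integrable lborel A (\<lambda>x. phi (x - c) * Phi (g x))"
proof (rule set_integrable_bound[OF integrable_phi_shift[of c] _ A])
  fix x
  have "phi (x - c) * Phi (g x) \<le> phi (x - c)"
    using Phi_le_1[of "g x"] phi_pos[of "x - c"] by (simp add: mult_left_le)
  then show "\<bar>phi (x - c) * Phi (g x)\<bar> \<le> phi (x - c)"
    using Phi_nonneg[of "g x"] phi_pos[of "x - c"] by simp
qed measurable

lemma si_phi_Phi:
  assumes [measurable]: "g \<in> borel_measurable borel" and A: "A \<in> sets borel"
  shows "set_integrable lborel A (\<lambda>x. phi x * Phi (g x))"
  using si_phi_shift_Phi[OF assms, of 0] by simp

lemma si_phi_lin: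
  assumes A: "A \<in> sets borel" and L: "0 \<le> L" "L \<le> 1"
  shows "set_integrable lborel A (\<lambda>x. phi (x - s) - L * phi x)"
proof -
  have "set_integrable lborel A (\<lambda>x. phi (x - s))"
    by (rule set_integrable_bound[OF integrable_phi_shift[of s] _ A]) (auto simp: abs_of_pos phi_pos)
  moreover have "set_integrable lborel A (\<lambda>x. phi x)"
    by (rule set_integrable_bound[OF integrable_phi _ A]) (auto simp: abs_of_pos phi_pos)
  ultimately show ?thesis by auto
qed

lemma PiB_eq1:
  assumes \<sigma>: "\<sigma> > 0" and T: "T > 0" and L: "0 < L" "L < 1"
  defines "s \<equiv> \<sigma> * sqrt T"
  defines "zb \<equiv> zbar L s" and "lp \<equiv> ln L / s + s/2"
  shows "PiB \<sigma> L T = Phi zb * ((Phi (zb - s) - L * Phi zb) - (Phi (lp - s) - L * Phi lp))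
           + (1 - Phi (zb - s) * Phi zb) - 2 * KK s zb"
proof -
  interpret P: prob_space stdN by (rule prob_space_stdN)
  have s: "s > 0" using \<sigma> T by (simp add: s_def)
  have zb: "rr s zb = L" using zbar[OF s L] by (simp add: zb_def)
  have lpzb: "lp < zb" using lp_less_zb[OF s L] by (simp add: lp_def zb_def)
  define A where "A = (\<lambda>z. if lp < z \<and> z < zb then exp (s * z - s^2/2) - L else 0)"
  define B where "B = (\<lambda>z. if zb \<le> z then exp (s * z - s^2/2) - rr s z else 0)"
  have [measurable]: "A \<in> borel_measurable borel" unfolding A_def by measurable
  have [measurable]: "B \<in> borel_measurable borel" unfolding B_def by measurable
  define f where "f = (\<lambda>p::real\<times>real. A (fst p) * (if snd p \<le> zb then 1 else 0)
                        + B (fst p) * (if snd p \<le> fst p then 1 else 0))"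
  have PiB_f: "PiB \<sigma> L T = integral\<^sup>L (stdN \<Otimes>\<^sub>M stdN) f"
    unfolding PiB_def
    by (rule Bochner_Integration.integral_cong[OF refl])
       (simp only: payoff_eq[OF \<sigma> T L], simp add: f_def A_def B_def s_def zb_def lp_def)
  have meas_f [measurable]: "f \<in> borel_measurable (stdN \<Otimes>\<^sub>M stdN)"
    unfolding f_def by measurable
  define g where "g = (\<lambda>p::real\<times>real. 2 * (exp (s * fst p - s^2/2) + 1))"
  have meas_g [measurable]: "g \<in> borel_measurable (stdN \<Otimes>\<^sub>M stdN)"
    unfolding g_def by measurable
  have int_g1: "integrable stdN (\<lambda>x. 2 * (exp (s * x - s^2/2) + 1))"
  proof (subst integrable_stdN_iff)
    show "integrable lborel (\<lambda>x. phi x * (2 * (exp (s * x - s^2/2) + 1)))"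
    proof -
      have "(\<lambda>x. phi x * (2 * (exp (s * x - s^2/2) + 1))) = (\<lambda>z. 2 * (phi (z - s) + phi z))"
      proof
        fix x show "phi x * (2 * (exp (s * x - s^2/2) + 1)) = 2 * (phi (x - s) + phi x)"
          using phi_shift[of s x] by (simp add: algebra_simps)
      qed
      then show ?thesis using integrable_phi_bound[of 2 s] by simp
    qed
  qed measurable
  have int_g: "integrable (stdN \<Otimes>\<^sub>M stdN) g"
  proof (rule pair_sigma_finite.Fubini_integrable[OF pair_stdN meas_g])
    have "(LINT y|stdN. norm (g (x, y))) = 2 * (exp (s * x - s^2/2) + 1)" for x
      using P.prob_space by (simp add: g_def)
    then show "integrable stdN (\<lambda>x. LINT y|stdN. norm (g (x, y)))"
      using int_g1 by simp
    show "AE x in stdN. integrable stdN (\<lambda>y. g (x, y))"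
      by (simp add: g_def)
  qed
  have bA: "\<bar>A z\<bar> \<le> exp (s * z - s^2/2) + 1" for z
    using L by (auto simp: A_def abs_le_iff) (smt (verit) exp_gt_zero)+
  have bB: "\<bar>B z\<bar> \<le> exp (s * z - s^2/2) + 1" for z
    using rr_pos[of s z] rr_less_1[OF s, of z]
    by (auto simp: B_def abs_le_iff) (smt (verit) exp_gt_zero)+
  have int_f: "integrable (stdN \<Otimes>\<^sub>M stdN) f"
  proof (rule Bochner_Integration.integrable_bound[OF int_g meas_f], intro AE_I2)
    fix p :: "real \<times> real"
    have "\<bar>f p\<bar> \<le> \<bar>A (fst p)\<bar> + \<bar>B (fst p)\<bar>"
      unfolding f_def by (auto simp: abs_mult)
    also have "\<dots> \<le> g p" using bA[of "fst p"] bB[of "fst p"] by (simp add: g_def)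
    finally show "norm (f p) \<le> norm (g p)" by simp
  qed
  have inner: "(LINT y|stdN. f (x, y)) = A x * Phi zb + B x * Phi x" for x
  proof -
    have "(\<lambda>y. f (x, y)) = (\<lambda>y. A x * indicator {..zb} y + B x * indicator {..x} y)"
      by (auto simp: f_def indicator_def fun_eq_iff)
    moreover have "integrable stdN (indicator {..c} :: real \<Rightarrow> real)" for c
      by (intro integrable_real_indicator) (auto simp: less_top[symmetric])
    ultimately show ?thesis
      by (simp add: Phi_def)
  qed
  have "PiB \<sigma> L T = (LINT x|stdN. A x * Phi zb + B x * Phi x)"
    unfolding PiB_f pair_sigma_finite.integral_fst'[OF pair_stdN int_f, symmetric] inner ..
  also have "\<dots> = (\<integral>x. phi x * (A x * Phi zb + B x * Phi x) \<partial>lborel)"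
    by (rule integral_stdN) measurable
  also have "\<dots> = (\<integral>x. Phi zb * (indicator {lp<..<zb} x *\<^sub>R (phi (x - s) - L * phi x))
       + indicator {zb..} x *\<^sub>R ((phi (x - s) * Phi x + phi x * Phi (x - s)) - 2 * (phi x * Phi (x - s))) \<partial>lborel)"
  proof (rule Bochner_Integration.integral_cong[OF refl])
    fix x
    have e: "phi x * exp (s * x - s^2/2) = phi (x - s)" using phi_shift[of s x] by (simp add: mult.commute)
    have r: "phi x * (rr s x * Phi x) = phi x * Phi (x - s)"
      using Phi_pos[of x] by (simp add: rr_def)
    show "phi x * (A x * Phi zb + B x * Phi x) = Phi zb * (indicator {lp<..<zb} x *\<^sub>R (phi (x - s) - L * phi x))
       + indicator {zb..} x *\<^sub>R ((phi (x - s) * Phi x + phi x * Phi (x - s)) - 2 * (phi x * Phi (x - s)))"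
      using e r by (auto simp: A_def B_def indicator_def algebra_simps)
  qed
  also have "\<dots> = Phi zb * (LINT x:{lp<..<zb}|lborel. phi (x - s) - L * phi x)
       + ((LINT x:{zb..}|lborel. phi (x - s) * Phi x + phi x * Phi (x - s))
          - 2 * (LINT x:{zb..}|lborel. phi x * Phi (x - s)))"
  proof -
    have i1: "set_integrable lborel {lp<..<zb} (\<lambda>x. phi (x - s) - L * phi x)"
      using L by (intro si_phi_lin) auto
    have i2: "set_integrable lborel {zb..} (\<lambda>x. phi (x - s) * Phi x)"
      using si_phi_shift_Phi[of "\<lambda>x. x" "{zb..}" s] by simp
    have i3: "set_integrable lborel {zb..} (\<lambda>x. phi x * Phi (x - s))"
      by (rule si_phi_Phi) auto
    have i4: "set_integrable lborel {zb..} (\<lambda>x. (phi (x - s) * Phi x + phi x * Phi (x - s)) - 2 * (phi x * Phi (x - s)))"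
      using i2 i3 by auto
    have "(LINT x:{zb..}|lborel. (phi (x - s) * Phi x + phi x * Phi (x - s)) - 2 * (phi x * Phi (x - s)))
        = (LINT x:{zb..}|lborel. phi (x - s) * Phi x + phi x * Phi (x - s)) - 2 * (LINT x:{zb..}|lborel. phi x * Phi (x - s))"
      using i2 i3 by (subst set_integral_diff(2)) auto
    moreover have "(\<integral>x. Phi zb * (indicator {lp<..<zb} x *\<^sub>R (phi (x - s) - L * phi x))
       + indicator {zb..} x *\<^sub>R ((phi (x - s) * Phi x + phi x * Phi (x - s)) - 2 * (phi x * Phi (x - s))) \<partial>lborel)
       = Phi zb * (LINT x:{lp<..<zb}|lborel. phi (x - s) - L * phi x)
         + (LINT x:{zb..}|lborel. (phi (x - s) * Phi x + phi x * Phi (x - s)) - 2 * (phi x * Phi (x - s)))"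
      using i1 i4 unfolding set_integrable_def set_lebesgue_integral_def
      by (subst Bochner_Integration.integral_add) auto
    ultimately show ?thesis by simp
  qed
  also have "(LINT x:{lp<..<zb}|lborel. phi (x - s) - L * phi x) = (Phi (zb - s) - L * Phi zb) - (Phi (lp - s) - L * Phi lp)"
    using lpzb
    by (intro ftc_Ioo) (auto intro!: derivative_eq_intros continuous_intros isCont_o2[OF _ isCont_phi] isCont_phi)
  also have "(LINT x:{zb..}|lborel. phi (x - s) * Phi x + phi x * Phi (x - s)) = 1 * 1 - Phi (zb - s) * Phi zb"
  proof (rule ftc_Ici)
    show "((\<lambda>x. Phi (x - s) * Phi x) has_real_derivative phi (x - s) * Phi x + phi x * Phi (x - s)) (at x)" for x
      by (auto intro!: derivative_eq_intros simp: algebra_simps)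
    show "isCont (\<lambda>x. phi (x - s) * Phi x + phi x * Phi (x - s)) x" for x
      by (intro continuous_intros isCont_o2[OF _ isCont_phi] isCont_o2[OF _ isCont_Phi] isCont_phi isCont_Phi)
    show "set_integrable lborel {zb..} (\<lambda>x. phi (x - s) * Phi x + phi x * Phi (x - s))"
      using si_phi_shift_Phi[of "\<lambda>x. x" "{zb..}" s] si_phi_Phi[of "\<lambda>x. x - s" "{zb..}"] by auto
    show "((\<lambda>x. Phi (x - s) * Phi x) \<longlongrightarrow> 1 * 1) at_top"
      by (intro tendsto_mult Phi_at_top filterlim_compose[OF Phi_at_top shift_at_top])
  qed
  finally show ?thesis by (simp add: KK_def)
qed

lemma Ik_eq:
  assumes s: "s > 0"
  shows "Ik s (exp (s * a - s^2/2)) k = s * (LINT z:{a..}|lborel. phi z * Phi (z - s) * (s * z - s^2/2)^k)"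
proof -
  have "Ik s (exp (s * a - s^2/2)) k
      = (\<integral>w. indicator {s * a - s^2/2..} w *\<^sub>R (phi (w / s + s / 2) * Phi (w / s - s / 2) * w ^ k) \<partial>lborel)"
    by (simp add: Ik_def set_lebesgue_integral_def)
  also have "\<dots> = \<bar>s\<bar> *\<^sub>R (\<integral>z. indicator {s * a - s^2/2..} (- (s^2)/2 + s * z) *\<^sub>R
       (phi ((- (s^2)/2 + s * z) / s + s / 2) * Phi ((- (s^2)/2 + s * z) / s - s / 2) * (- (s^2)/2 + s * z) ^ k) \<partial>lborel)"
    using s by (intro lborel_integral_real_affine) simp
  also have "\<dots> = s * (LINT z:{a..}|lborel. phi z * Phi (z - s) * (s * z - s^2/2)^k)"
    unfolding set_lebesgue_integral_def
  proof -
    have "(\<integral>z. indicator {s * a - s^2/2..} (- (s^2)/2 + s * z) *\<^sub>R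
       (phi ((- (s^2)/2 + s * z) / s + s / 2) * Phi ((- (s^2)/2 + s * z) / s - s / 2) * (- (s^2)/2 + s * z) ^ k) \<partial>lborel)
      = (\<integral>z. indicator {a..} z *\<^sub>R (phi z * Phi (z - s) * (s * z - s^2/2)^k) \<partial>lborel)"
    proof (rule Bochner_Integration.integral_cong[OF refl])
      fix z
      have e1: "(- (s^2)/2 + s * z) / s + s / 2 = z" using s by (simp add: field_simps power2_eq_square)
      have e2: "(- (s^2)/2 + s * z) / s - s / 2 = z - s" using s by (simp add: field_simps power2_eq_square)
      have e3: "indicator {s * a - s^2/2..} (- (s^2)/2 + s * z) = (indicator {a..} z :: real)"
        using s by (simp add: indicator_def)
      have e4: "(- (s^2)/2 + s * z) ^ k = (s * z - s^2/2) ^ k" by (simp add: algebra_simps)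
      show "indicator {s * a - s^2/2..} (- (s^2)/2 + s * z) *\<^sub>R
       (phi ((- (s^2)/2 + s * z) / s + s / 2) * Phi ((- (s^2)/2 + s * z) / s - s / 2) * (- (s^2)/2 + s * z) ^ k)
       = indicator {a..} z *\<^sub>R (phi z * Phi (z - s) * (s * z - s^2/2)^k)"
        by (simp only: e1 e2 e3 e4)
    qed
    then show "\<bar>s\<bar> *\<^sub>R (\<integral>z. indicator {s * a - s^2/2..} (- (s^2)/2 + s * z) *\<^sub>R
       (phi ((- (s^2)/2 + s * z) / s + s / 2) * Phi ((- (s^2)/2 + s * z) / s - s / 2) * (- (s^2)/2 + s * z) ^ k) \<partial>lborel)
      = s * (\<integral>z. indicator {a..} z *\<^sub>R (phi z * Phi (z - s) * (s * z - s^2/2)^k) \<partial>lborel)"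
      using s by simp
  qed
  finally show ?thesis .
qed

lemma integrable_phi_poly:
  "integrable lborel (\<lambda>z. phi z * (A + B * \<bar>z\<bar> + C * z^2))"
proof -
  have m0: "integrable lborel (\<lambda>z. phi z * \<bar>z\<bar>^0)" and m1: "integrable lborel (\<lambda>z. phi z * \<bar>z\<bar>^1)"
    and m2: "integrable lborel (\<lambda>z. phi z * \<bar>z\<bar>^2)"
    unfolding phi_def by (rule integrable_std_normal_moment_abs)+
  have "integrable lborel (\<lambda>z. A * (phi z * \<bar>z\<bar>^0) + B * (phi z * \<bar>z\<bar>^1) + C * (phi z * \<bar>z\<bar>^2))"
    using m0 m1 m2 by auto
  then show ?thesis by (simp add: algebra_simps)
qed

lemma si_poly:
  assumes [measurable]: "g \<in> borel_measurable borel" "q \<in> borel_measurable borel"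
    and S: "S \<in> sets borel"
    and q: "\<And>z. \<bar>q z\<bar> \<le> A + B * \<bar>z\<bar> + C * z^2"
  shows "set_integrable lborel S (\<lambda>z. phi z * Phi (g z) * q z)"
proof (rule set_integrable_bound[OF integrable_phi_poly[of A B C] _ S])
  fix z
  have "\<bar>phi z * Phi (g z) * q z\<bar> = phi z * (Phi (g z) * \<bar>q z\<bar>)"
    using phi_pos[of z] Phi_nonneg[of "g z"] by (simp add: abs_mult)
  also have "\<dots> \<le> phi z * \<bar>q z\<bar>"
    using phi_pos[of z] Phi_le_1[of "g z"] Phi_nonneg[of "g z"]
    by (intro mult_left_mono) (auto simp: mult_left_le_one_le)
  also have "\<dots> \<le> phi z * (A + B * \<bar>z\<bar> + C * z^2)"
    using phi_pos[of z] q[of z] by (intro mult_left_mono) auto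
  finally show "\<bar>phi z * Phi (g z) * q z\<bar> \<le> phi z * (A + B * \<bar>z\<bar> + C * z^2)" .
qed measurable

lemma sq_half_at_top: "filterlim (\<lambda>x::real. x^2 / 2) at_top at_top"
proof -
  have sq: "filterlim (\<lambda>x::real. x^2) at_top at_top"
    by (rule filterlim_pow_at_top[OF _ filterlim_ident]) auto
  have "filterlim (\<lambda>x::real. (1/2) * x^2) at_top at_top"
    by (rule filterlim_tendsto_pos_mult_at_top[OF tendsto_const _ sq]) simp
  then show ?thesis by simp
qed

lemma phi_at_top: "(phi \<longlongrightarrow> 0) at_top"
proof -
  have "filterlim (\<lambda>x::real. - (x^2 / 2)) at_bot at_top"
    using sq_half_at_top by (simp add: filterlim_uminus_at_bot)
  then have "((\<lambda>x::real. exp (- (x^2 / 2))) \<longlongrightarrow> 0) at_top"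
    by (rule filterlim_compose[OF exp_at_bot])
  then have "((\<lambda>x::real. exp (- (x^2 / 2)) / sqrt (2 * pi)) \<longlongrightarrow> 0 / sqrt (2 * pi)) at_top"
    by (rule tendsto_divide) auto
  then show ?thesis by (simp add: phi_def'[abs_def])
qed

lemma zphi_at_top: "((\<lambda>z. z * phi z) \<longlongrightarrow> 0) at_top"
proof -
  have 1: "((\<lambda>z::real. (z^2/2)^1 / exp (z^2/2)) \<longlongrightarrow> 0) at_top"
    by (rule filterlim_compose[OF tendsto_power_div_exp_0 sq_half_at_top])
  have 2: "((\<lambda>z::real. 2 * inverse z) \<longlongrightarrow> 2 * 0) at_top"
    by (intro tendsto_mult tendsto_const tendsto_inverse_0_at_top filterlim_ident)
  have 3: "((\<lambda>z::real. ((z^2/2)^1 / exp (z^2/2)) * (2 * inverse z) / sqrt (2 * pi)) \<longlongrightarrow> 0 * (2 * 0) / sqrt (2 * pi)) at_top"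
    by (intro tendsto_divide tendsto_mult 1 2) auto
  have ev: "\<forall>\<^sub>F z in at_top. ((z^2/2)^1 / exp (z^2/2)) * (2 * inverse z) / sqrt (2 * pi) = z * phi z"
  proof (rule eventually_mono[OF eventually_gt_at_top[of 0]])
    fix z :: real assume z: "0 < z"
    show "((z^2/2)^1 / exp (z^2/2)) * (2 * inverse z) / sqrt (2 * pi) = z * phi z"
      using z by (simp add: phi_def' exp_minus field_simps power2_eq_square)
  qed
  show ?thesis using tendsto_cong[OF ev] 3 by simp
qed

lemma F1_at_top: "((\<lambda>z. (z - s) * phi z * Phi (z - s)) \<longlongrightarrow> 0) at_top"
proof -
  have P: "((\<lambda>z. Phi (z - s)) \<longlongrightarrow> 1) at_top"
    by (rule filterlim_compose[OF Phi_at_top shift_at_top])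
  have "((\<lambda>z. (z * phi z) * Phi (z - s) - s * (phi z * Phi (z - s))) \<longlongrightarrow> 0 * 1 - s * (0 * 1)) at_top"
    by (intro tendsto_intros zphi_at_top phi_at_top P)
  then show ?thesis by (simp add: algebra_simps)
qed

lemma phiPhi_at_top: "((\<lambda>z. phi z * Phi (z - s)) \<longlongrightarrow> 0) at_top"
proof -
  have P: "((\<lambda>z. Phi (z - s)) \<longlongrightarrow> 1) at_top"
    by (rule filterlim_compose[OF Phi_at_top shift_at_top])
  show ?thesis using tendsto_mult[OF phi_at_top P] by simp
qed

definition DD :: "real \<Rightarrow> real" where
  "DD s = exp (- (s^2)/4) / (2 * sqrt pi)"

lemma phi_prod: "phi z * phi (z - s) = DD s * sqrt 2 * phi (sqrt 2 * (z - s/2))"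
proof -
  have e: "exp (- (z^2)/2) * exp (- ((z - s)^2)/2) = exp (- (s^2)/4) * exp (- ((sqrt 2 * (z - s/2))^2)/2)"
  proof -
    have "- (z^2)/2 + - ((z - s)^2)/2 = - (s^2)/4 + - ((sqrt 2 * (z - s/2))^2)/2"
      by (simp add: power_mult_distrib power2_eq_square field_simps)
    then show ?thesis by (simp add: exp_add[symmetric])
  qed
  have r: "sqrt (2 * pi) = sqrt 2 * sqrt pi" by (simp add: real_sqrt_mult)
  have p: "sqrt pi * sqrt pi = pi" by simp
  show ?thesis
    unfolding phi_def' DD_def r using e
    by (simp add: field_simps p)
qed

lemma lin_arg_at_top: "c > 0 \<Longrightarrow> filterlim (\<lambda>z::real. c * (z - d)) at_top at_top"
  using lin_at_top[of c "- c * d"] by (simp add: algebra_simps)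

lemma phi_le_1: "phi x \<le> 1"
proof -
  have "1 \<le> sqrt (2 * pi)" using pi_gt3 by simp
  then have "1 / sqrt (2 * pi) \<le> 1" by simp
  then show ?thesis using phi_le[of x] by linarith
qed

lemma G1:
  "(LINT z:{a..}|lborel. phi z * phi (z - s)) = DD s * (1 - Phi (sqrt 2 * (a - s/2)))"
proof -
  have "(LINT z:{a..}|lborel. phi z * phi (z - s)) = DD s * 1 - DD s * Phi (sqrt 2 * (a - s/2))"
  proof (rule ftc_Ici)
    show "((\<lambda>z. DD s * Phi (sqrt 2 * (z - s/2))) has_real_derivative phi x * phi (x - s)) (at x)" for x
      by (auto intro!: derivative_eq_intros simp: phi_prod)
    show "isCont (\<lambda>z. phi z * phi (z - s)) x" for x
      by (intro continuous_intros isCont_o2[OF _ isCont_phi] isCont_phi)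
    show "set_integrable lborel {a..} (\<lambda>z. phi z * phi (z - s))"
    proof (rule set_integrable_bound[OF integrable_phi])
      fix z show "\<bar>phi z * phi (z - s)\<bar> \<le> phi z"
        using phi_pos[of z] phi_pos[of "z - s"] phi_le_1[of "z - s"] by (simp add: abs_mult mult_left_le)
    qed auto
    have "((\<lambda>z. Phi (sqrt 2 * (z - s/2))) \<longlongrightarrow> 1) at_top"
      by (rule filterlim_compose[OF Phi_at_top lin_arg_at_top]) simp
    then show "((\<lambda>z. DD s * Phi (sqrt 2 * (z - s/2))) \<longlongrightarrow> DD s * 1) at_top"
      by (intro tendsto_intros)
  qed
  then show ?thesis by (simp add: algebra_simps)
qed

lemma G2:
  "(LINT z:{a..}|lborel. - z * phi z * Phi (z - s) + phi z * phi (z - s)) = - (phi a * Phi (a - s))"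
proof -
  have "(LINT z:{a..}|lborel. - z * phi z * Phi (z - s) + phi z * phi (z - s)) = 0 - phi a * Phi (a - s)"
  proof (rule ftc_Ici)
    show "((\<lambda>z. phi z * Phi (z - s)) has_real_derivative - x * phi x * Phi (x - s) + phi x * phi (x - s)) (at x)" for x
      by (auto intro!: derivative_eq_intros simp: algebra_simps)
    show "isCont (\<lambda>z. - z * phi z * Phi (z - s) + phi z * phi (z - s)) x" for x
      by (intro continuous_intros isCont_o2[OF _ isCont_phi] isCont_o2[OF _ isCont_Phi] isCont_phi)
    show "set_integrable lborel {a..} (\<lambda>z. - z * phi z * Phi (z - s) + phi z * phi (z - s))"
    proof (rule set_integrable_bound[OF integrable_phi_poly[of 1 1 0]])
      fix z
      have 1: "\<bar>z * phi z * Phi (z - s)\<bar> \<le> phi z * \<bar>z\<bar>"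
        using phi_pos[of z] Phi_nonneg[of "z - s"] Phi_le_1[of "z - s"]
        by (simp add: abs_mult mult_left_le mult.commute mult.left_commute)
      have 2: "\<bar>phi z * phi (z - s)\<bar> \<le> phi z"
        using phi_pos[of z] phi_pos[of "z - s"] phi_le_1[of "z - s"] by (simp add: abs_mult mult_left_le)
      show "\<bar>- z * phi z * Phi (z - s) + phi z * phi (z - s)\<bar> \<le> phi z * (1 + 1 * \<bar>z\<bar> + 0 * z^2)"
        using 1 2 by (simp add: algebra_simps)
    qed auto
    show "((\<lambda>z. phi z * Phi (z - s)) \<longlongrightarrow> 0) at_top" by (rule phiPhi_at_top)
  qed
  then show ?thesis by simp
qed

lemma G3:
  assumes s: "s > 0"
  shows "(LINT z:{a..}|lborel. phi z * Phi (z - s) * (1 + s * z - z^2))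
    = DD s * (s/2) - ((a - s) * phi a * Phi (a - s)
        + DD s * (phi (sqrt 2 * (a - s/2)) / sqrt 2 + s/2 * Phi (sqrt 2 * (a - s/2))))"
proof (rule ftc_Ici)
  fix x
  show "((\<lambda>z. (z - s) * phi z * Phi (z - s) + DD s * (phi (sqrt 2 * (z - s/2)) / sqrt 2 + s/2 * Phi (sqrt 2 * (z - s/2))))
        has_real_derivative phi x * Phi (x - s) * (1 + s * x - x^2)) (at x)"
  proof -
    have p: "phi x * phi (x - s) = DD s * sqrt 2 * phi (sqrt 2 * (x - s/2))" by (rule phi_prod)
    have d1: "((\<lambda>z. (z - s) * phi z * Phi (z - s)) has_real_derivative
        (phi x * Phi (x - s) - x * phi x * (x - s) * Phi (x - s) + (x - s) * (phi x * phi (x - s)))) (at x)"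
      by (auto intro!: derivative_eq_intros simp: algebra_simps)
    have d2: "((\<lambda>z. phi (sqrt 2 * (z - s/2)) / sqrt 2) has_real_derivative
        (- (sqrt 2 * (x - s/2)) * phi (sqrt 2 * (x - s/2)))) (at x)"
      by (auto intro!: derivative_eq_intros)
    have d3: "((\<lambda>z. s/2 * Phi (sqrt 2 * (z - s/2))) has_real_derivative
        (s/2 * (phi (sqrt 2 * (x - s/2)) * sqrt 2))) (at x)"
      by (auto intro!: derivative_eq_intros)
    have d: "((\<lambda>z. (z - s) * phi z * Phi (z - s) + DD s * (phi (sqrt 2 * (z - s/2)) / sqrt 2 + s/2 * Phi (sqrt 2 * (z - s/2))))
        has_real_derivative
        ((phi x * Phi (x - s) - x * phi x * (x - s) * Phi (x - s) + (x - s) * (phi x * phi (x - s)))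
          + DD s * ((- (sqrt 2 * (x - s/2)) * phi (sqrt 2 * (x - s/2))) + (s/2 * (phi (sqrt 2 * (x - s/2)) * sqrt 2))))) (at x)"
      by (intro DERIV_add d1 DERIV_cmult d2 d3)
    have e: "(phi x * Phi (x - s) - x * phi x * (x - s) * Phi (x - s) + (x - s) * (phi x * phi (x - s)))
          + DD s * ((- (sqrt 2 * (x - s/2)) * phi (sqrt 2 * (x - s/2))) + (s/2 * (phi (sqrt 2 * (x - s/2)) * sqrt 2)))
        = phi x * Phi (x - s) * (1 + s * x - x^2)"
      unfolding p by (simp add: algebra_simps power2_eq_square)
    show ?thesis using d unfolding e .
  qed
  show "isCont (\<lambda>z. phi z * Phi (z - s) * (1 + s * z - z^2)) x"
    by (intro continuous_intros isCont_o2[OF _ isCont_phi] isCont_o2[OF _ isCont_Phi] isCont_phi)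
next
  show "set_integrable lborel {a..} (\<lambda>z. phi z * Phi (z - s) * (1 + s * z - z^2))"
  proof (rule si_poly[where A=1 and B=s and C=1])
    fix z
    show "\<bar>1 + s * z - z^2\<bar> \<le> 1 + s * \<bar>z\<bar> + 1 * z^2"
    proof -
      have h: "s * z \<le> \<bar>s * z\<bar>" "- (s * z) \<le> \<bar>s * z\<bar>" "0 \<le> z^2"
        by auto
      have h2: "\<bar>s * z\<bar> = s * \<bar>z\<bar>" using s by (simp add: abs_mult)
      show ?thesis unfolding abs_le_iff using h h2 by linarith
    qed
  qed auto
next
  have a: "((\<lambda>z. phi (sqrt 2 * (z - s/2))) \<longlongrightarrow> 0) at_top"
    by (rule filterlim_compose[OF phi_at_top lin_arg_at_top]) simp
  have b: "((\<lambda>z. Phi (sqrt 2 * (z - s/2))) \<longlongrightarrow> 1) at_top"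
    by (rule filterlim_compose[OF Phi_at_top lin_arg_at_top]) simp
  have "((\<lambda>z. (z - s) * phi z * Phi (z - s) + DD s * (phi (sqrt 2 * (z - s/2)) / sqrt 2 + s/2 * Phi (sqrt 2 * (z - s/2))))
     \<longlongrightarrow> 0 + DD s * (0 / sqrt 2 + s/2 * 1)) at_top"
    by (intro tendsto_intros F1_at_top a b) auto
  then show "((\<lambda>z. (z - s) * phi z * Phi (z - s) + DD s * (phi (sqrt 2 * (z - s/2)) / sqrt 2 + s/2 * Phi (sqrt 2 * (z - s/2))))
     \<longlongrightarrow> DD s * (s/2)) at_top" by simp
qed

lemma I_comb:
  assumes s: "s > 0"
  shows "(1 / s^2 + 1/4) * Ik s (exp (s * a - s^2/2)) 0 - (1 / s^2)^2 * Ik s (exp (s * a - s^2/2)) 2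
    = (1/s) * (LINT z:{a..}|lborel. phi z * Phi (z - s) * (1 + s * z - z^2))"
proof -
  have i0: "set_integrable lborel {a..} (\<lambda>z. phi z * Phi (z - s) * (s * z - s^2/2)^0)"
    by (rule si_poly[where A=1 and B=0 and C=0]) auto
  have i2: "set_integrable lborel {a..} (\<lambda>z. phi z * Phi (z - s) * (s * z - s^2/2)^2)"
  proof (rule si_poly[where A="s^2 * s^2/2" and B=0 and C="2 * s^2"])
    fix z
    have "0 \<le> (s * z + s^2/2)^2" by simp
    then have "(s * z - s^2/2)^2 \<le> s^2 * s^2/2 + 0 * \<bar>z\<bar> + 2 * s^2 * z^2"
      by (simp add: power2_eq_square algebra_simps)
    then show "\<bar>(s * z - s^2/2)^2\<bar> \<le> s^2 * s^2/2 + 0 * \<bar>z\<bar> + 2 * s^2 * z^2"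
      by simp
  qed auto
  have "(1 / s^2 + 1/4) * Ik s (exp (s * a - s^2/2)) 0 - (1 / s^2)^2 * Ik s (exp (s * a - s^2/2)) 2
      = (LINT z:{a..}|lborel. ((1 / s^2 + 1/4) * s) * (phi z * Phi (z - s) * (s * z - s^2/2)^0)
           - ((1 / s^2)^2 * s) * (phi z * Phi (z - s) * (s * z - s^2/2)^2))"
    unfolding Ik_eq[OF s] using i0 i2 by (subst set_integral_diff(2)) auto
  also have "\<dots> = (LINT z:{a..}|lborel. (1/s) * (phi z * Phi (z - s) * (1 + s * z - z^2)))"
  proof (rule set_lebesgue_integral_cong)
    show "\<forall>z. z \<in> {a..} \<longrightarrow> ((1 / s^2 + 1/4) * s) * (phi z * Phi (z - s) * (s * z - s^2/2)^0)
           - ((1 / s^2)^2 * s) * (phi z * Phi (z - s) * (s * z - s^2/2)^2)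
         = (1/s) * (phi z * Phi (z - s) * (1 + s * z - z^2))"
      using s by (simp add: field_simps power2_eq_square)
  qed simp
  finally show ?thesis by simp
qed

definition PhiInv :: "real \<Rightarrow> real" where
  "PhiInv y = (THE x. Phi x = y)"

lemma Phi_surj:
  assumes "0 < y" "y < 1"
  shows "\<exists>x. Phi x = y"
proof -
  have "\<forall>\<^sub>F x in at_bot. Phi x < y" using order_tendstoD(2)[OF Phi_at_bot assms(1)] .
  then obtain a where a: "Phi a < y" by (auto simp: eventually_at_bot_linorder)
  have "\<forall>\<^sub>F x in at_top. Phi x > y" using order_tendstoD(1)[OF Phi_at_top assms(2)] .
  then obtain b where b: "Phi b > y" by (auto simp: eventually_at_top_linorder)
  have "a \<le> b"
  proof (rule ccontr)
    assume "\<not> a \<le> b" then have "Phi b < Phi a" by simp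
    with a b show False by linarith
  qed
  then show ?thesis using a b IVT'[of Phi a y b] continuous_on_Phi by auto
qed

lemma Phi_PhiInv: "0 < y \<Longrightarrow> y < 1 \<Longrightarrow> Phi (PhiInv y) = y"
proof -
  assume "0 < y" "y < 1"
  then obtain x where x: "Phi x = y" using Phi_surj by blast
  have "PhiInv y = x" unfolding PhiInv_def by (rule the_equality) (use x in auto)
  then show ?thesis using x by simp
qed

lemma PhiInv_Phi: "PhiInv (Phi x) = x"
  unfolding PhiInv_def by (rule the_equality) auto

lemma DERIV_PhiInv:
  assumes "0 < y" "y < 1"
  shows "(PhiInv has_real_derivative inverse (phi (PhiInv y))) (at y)"
proof (rule DERIV_inverse_function[where f = Phi and a = 0 and b = 1])
  show "(Phi has_real_derivative phi (PhiInv y)) (at (PhiInv y))" by (rule DERIV_Phi)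
  show "phi (PhiInv y) \<noteq> 0" using phi_pos by (simp add: less_imp_neq[symmetric]) 
  show "\<And>z. 0 < z \<Longrightarrow> z < 1 \<Longrightarrow> Phi (PhiInv z) = z" by (rule Phi_PhiInv)
  have "isCont PhiInv (Phi (PhiInv y))"
    by (rule isCont_inverse_function[where d = 1]) (auto simp: PhiInv_Phi isCont_Phi)
  then show "isCont PhiInv y" using Phi_PhiInv[OF assms] by simp
qed (use assms in auto)

definition SS :: "real \<Rightarrow> real \<Rightarrow> real" where
  "SS L z = z - PhiInv (L * Phi z)"

lemma LPhi_bounds: "0 < L \<Longrightarrow> L < 1 \<Longrightarrow> 0 < L * Phi z \<and> L * Phi z < 1"
proof -
  assume L: "0 < L" "L < 1"
  have "L * Phi z \<le> L * 1" by (rule mult_left_mono[OF Phi_le_1]) (use L in simp)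
  moreover have "0 < L * Phi z" using L Phi_pos[of z] by simp
  ultimately show ?thesis using L by linarith
qed

lemma DERIV_SS:
  assumes L: "0 < L" "L < 1"
  shows "(SS L has_real_derivative (1 - L * phi z / phi (PhiInv (L * Phi z)))) (at z)"
proof -
  have b: "0 < L * Phi z" "L * Phi z < 1" using LPhi_bounds[OF L] by auto
  have dg: "((\<lambda>z. L * Phi z) has_real_derivative L * phi z) (at z)"
    by (auto intro!: derivative_eq_intros)
  have "((\<lambda>z. PhiInv (L * Phi z)) has_real_derivative inverse (phi (PhiInv (L * Phi z))) * (L * phi z)) (at z)"
    using DERIV_chain2[where f=PhiInv and g="\<lambda>z. L * Phi z", OF DERIV_PhiInv[OF b] dg] by simp
  then show ?thesis unfolding SS_def[abs_def]
    by (auto intro!: derivative_eq_intros simp: field_simps)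
qed

lemma isCont_SS: "0 < L \<Longrightarrow> L < 1 \<Longrightarrow> isCont (SS L) z"
  using DERIV_SS DERIV_isCont by blast

lemma SS_pos:
  assumes L: "0 < L" "L < 1"
  shows "SS L z > 0"
proof -
  have b: "0 < L * Phi z" "L * Phi z < 1" using LPhi_bounds[OF L] by auto
  have "L * Phi z < Phi z" using L Phi_pos[of z] by simp
  then have "Phi (PhiInv (L * Phi z)) < Phi z" using Phi_PhiInv[OF b] by simp
  then show ?thesis by (simp add: SS_def)
qed

lemma rr_eq_iff_SS:
  assumes L: "0 < L" "L < 1"
  shows "rr s z = L \<longleftrightarrow> s = SS L z"
proof -
  have b: "0 < L * Phi z" "L * Phi z < 1" using LPhi_bounds[OF L] by auto
  have "rr s z = L \<longleftrightarrow> Phi (z - s) = L * Phi z"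
    using Phi_pos[of z] by (auto simp: rr_def field_simps)
  also have "\<dots> \<longleftrightarrow> Phi (z - s) = Phi (PhiInv (L * Phi z))" using Phi_PhiInv[OF b] by simp
  also have "\<dots> \<longleftrightarrow> s = SS L z" by (auto simp: SS_def)
  finally show ?thesis .
qed

lemma SS_zbar:
  assumes s: "s > 0" and L: "0 < L" "L < 1"
  shows "SS L (zbar L s) = s"
  using zbar[OF s L] rr_eq_iff_SS[OF L] by simp

lemma zbar_SS:
  assumes L: "0 < L" "L < 1"
  shows "zbar L (SS L z) = z"
proof -
  have "rr (SS L z) z = L" using rr_eq_iff_SS[OF L] by simp
  then show ?thesis using zbar_unique[OF SS_pos[OF L] L] by simp
qed

lemma isCont_zbar:
  assumes s: "s > 0" and L: "0 < L" "L < 1"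
  shows "isCont (zbar L) s"
proof -
  have "isCont (zbar L) (SS L (zbar L s))"
    by (rule isCont_inverse_function[where d = 1]) (auto simp: zbar_SS[OF L] isCont_SS[OF L])
  then show ?thesis using SS_zbar[OF s L] by simp
qed

definition vbz :: "real \<Rightarrow> real \<Rightarrow> real" where
  "vbz L s = exp (s * zbar L s - s^2/2)"

lemma vbz_gt_L:
  assumes s: "s > 0" and L: "0 < L" "L < 1"
  shows "vbz L s > L"
  using rr_less[OF s, of "zbar L s"] zbar[OF s L] by (simp add: vbz_def)

lemma DERIV_zbar:
  assumes s: "s > 0" and L: "0 < L" "L < 1"
  shows "(zbar L has_real_derivative vbz L s / (vbz L s - L)) (at s)"
proof -
  define zb where "zb = zbar L s"
  define v where "v = vbz L s"
  have v: "v > L" using vbz_gt_L[OF s L] by (simp add: v_def)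
  have pinv: "PhiInv (L * Phi zb) = zb - s"
  proof -
    have "Phi (zb - s) = L * Phi zb" using zbar[OF s L] Phi_pos[of zb] by (simp add: rr_def zb_def field_simps)
    then show ?thesis by (metis PhiInv_Phi)
  qed
  have ph: "phi (zb - s) = v * phi zb"
    using phi_shift[of s zb] by (simp add: v_def vbz_def zb_def)
  have D: "1 - L * phi zb / phi (PhiInv (L * Phi zb)) = (v - L) / v"
    unfolding pinv ph using phi_pos[of zb] v L by (simp add: field_simps)
  have "(zbar L has_real_derivative inverse ((v - L) / v)) (at s)"
  proof (rule DERIV_inverse_function[where f = "SS L" and a = 0 and b = "s + 1"])
    show "(SS L has_real_derivative (v - L) / v) (at (zbar L s))"
      using DERIV_SS[OF L, of zb] D by (simp add: zb_def)
    show "(v - L) / v \<noteq> 0" using v L by simp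
    show "\<And>y. 0 < y \<Longrightarrow> y < s + 1 \<Longrightarrow> SS L (zbar L y) = y" using SS_zbar L by blast
    show "isCont (zbar L) s" by (rule isCont_zbar[OF s L])
  qed (use s in auto)
  then show ?thesis by (simp add: v_def)
qed

lemma isCont_vbz:
  assumes s: "s > 0" and L: "0 < L" "L < 1"
  shows "isCont (vbz L) s"
  unfolding vbz_def[abs_def]
  by (intro continuous_intros isCont_o2[OF isCont_zbar[OF s L]] isCont_zbar[OF s L]) auto

lemma mvt_bound:
  fixes k k' :: "real \<Rightarrow> real" and t0 t \<delta> W :: real
  assumes der: "\<And>x. \<bar>x - t0\<bar> < \<delta> \<Longrightarrow> (k has_real_derivative k' x) (at x)"
    and bound: "\<And>x. \<bar>x - t0\<bar> < \<delta> \<Longrightarrow> \<bar>k' x\<bar> \<le> W"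
    and t: "\<bar>t - t0\<bar> < \<delta>"
  shows "\<bar>k t - k t0\<bar> \<le> \<bar>t - t0\<bar> * W"
proof (cases t t0 rule: linorder_cases)
  case less
  have "\<exists>z. t < z \<and> z < t0 \<and> k t0 - k t = (t0 - t) * k' z"
    by (rule MVT2[OF less]) (use t in \<open>auto intro!: der\<close>)
  then obtain z where z: "t < z" "z < t0" "k t0 - k t = (t0 - t) * k' z" by blast
  have "\<bar>k' z\<bar> \<le> W" using z t less by (intro bound) auto
  moreover have "\<bar>k t - k t0\<bar> = (t0 - t) * \<bar>k' z\<bar>"
  proof -
    have "k t - k t0 = - ((t0 - t) * k' z)" using z by simp
    then show ?thesis using less by (simp add: abs_mult)
  qed
  ultimately show ?thesis using less by (simp add: mult_left_mono)
next
  case greater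
  have "\<exists>z. t0 < z \<and> z < t \<and> k t - k t0 = (t - t0) * k' z"
    by (rule MVT2[OF greater]) (use t in \<open>auto intro!: der\<close>)
  then obtain z where z: "t0 < z" "z < t" "k t - k t0 = (t - t0) * k' z" by blast
  have "\<bar>k' z\<bar> \<le> W" using z t greater by (intro bound) auto
  then show ?thesis using z greater by (simp add: abs_mult mult_left_mono)
qed simp

lemma DERIV_integral_param:
  fixes k k' :: "real \<Rightarrow> real \<Rightarrow> real" and w :: "real \<Rightarrow> real"
  assumes \<delta>: "\<delta> > 0"
    and der: "\<And>t y. \<bar>t - t0\<bar> < \<delta> \<Longrightarrow> ((\<lambda>t. k t y) has_real_derivative k' t y) (at t)"
    and meas: "\<And>t. k t \<in> borel_measurable lborel"
    and meas': "k' t0 \<in> borel_measurable lborel"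
    and intk: "\<And>t. \<bar>t - t0\<bar> < \<delta> \<Longrightarrow> integrable lborel (k t)"
    and intw: "integrable lborel w"
    and bound: "\<And>t y. \<bar>t - t0\<bar> < \<delta> \<Longrightarrow> \<bar>k' t y\<bar> \<le> w y"
  shows "((\<lambda>t. \<integral>y. k t y \<partial>lborel) has_real_derivative (\<integral>y. k' t0 y \<partial>lborel)) (at t0)"
  unfolding has_field_derivative_iff tendsto_at_iff_sequentially
proof (intro allI impI)
  fix X :: "nat \<Rightarrow> real"
  assume X: "\<forall>i. X i \<in> UNIV - {t0}" and lim: "X \<longlonglongrightarrow> t0"
  obtain N where N: "\<And>n. n \<ge> N \<Longrightarrow> \<bar>X n - t0\<bar> < \<delta>"
    using lim \<delta> unfolding LIMSEQ_iff by auto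
  define Y where "Y n = X (n + N)" for n
  have Y: "\<bar>Y n - t0\<bar> < \<delta>" "Y n \<noteq> t0" for n using N X by (auto simp: Y_def)
  have limY: "Y \<longlonglongrightarrow> t0" unfolding Y_def by (rule LIMSEQ_ignore_initial_segment[OF lim])
  define q where "q n y = (k (Y n) y - k t0 y) / (Y n - t0)" for n y
  have intq: "(\<integral>y. q n y \<partial>lborel) = ((\<integral>y. k (Y n) y \<partial>lborel) - (\<integral>y. k t0 y \<partial>lborel)) / (Y n - t0)" for n
    unfolding q_def using intk[OF Y(1)] intk[of t0] \<delta>
    by (simp add: Bochner_Integration.integral_diff)
  have "(\<lambda>n. \<integral>y. q n y \<partial>lborel) \<longlonglongrightarrow> (\<integral>y. k' t0 y \<partial>lborel)"
  proof (rule integral_dominated_convergence[where w = w])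
    show "q n \<in> borel_measurable lborel" for n unfolding q_def[abs_def] using meas by measurable
    show "AE y in lborel. (\<lambda>n. q n y) \<longlonglongrightarrow> k' t0 y"
    proof (intro AE_I2)
      fix y
      have "((\<lambda>t. (k t y - k t0 y) / (t - t0)) \<longlongrightarrow> k' t0 y) (at t0)"
        using der[of t0 y] \<delta> by (simp add: has_field_derivative_iff)
      then show "(\<lambda>n. q n y) \<longlonglongrightarrow> k' t0 y"
        unfolding tendsto_at_iff_sequentially q_def comp_def using Y(2) limY by auto
    qed
    show "AE y in lborel. norm (q n y) \<le> w y" for n
    proof (intro AE_I2)
      fix y
      have "\<bar>k (Y n) y - k t0 y\<bar> \<le> \<bar>Y n - t0\<bar> * w y"
        by (rule mvt_bound[where k' = "\<lambda>t. k' t y" and \<delta> = \<delta>]) (auto intro: der bound Y)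
      then show "norm (q n y) \<le> w y"
        using Y(2)[of n] by (simp add: q_def abs_divide divide_le_eq mult.commute)
    qed
  qed (use meas' intw in auto)
  then have "(\<lambda>n. ((\<integral>y. k (X (n + N)) y \<partial>lborel) - (\<integral>y. k t0 y \<partial>lborel)) / (X (n + N) - t0)) \<longlonglongrightarrow> (\<integral>y. k' t0 y \<partial>lborel)"
    unfolding intq by (simp add: Y_def)
  then show "((\<lambda>t. ((\<integral>y. k t y \<partial>lborel) - (\<integral>y. k t0 y \<partial>lborel)) / (t - t0)) \<circ> X) \<longlonglongrightarrow> (\<integral>y. k' t0 y \<partial>lborel)"
    unfolding comp_def by (rule LIMSEQ_offset)
qed

lemma shift_Ici:
  fixes g :: "real \<Rightarrow> real"
  shows "(LINT z:{a..}|lborel. g z) = (\<integral>y. indicator {0..} y * g (a + y) \<partial>lborel)"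
proof -
  have "(LINT z:{a..}|lborel. g z) = \<bar>1\<bar> *\<^sub>R (\<integral>y. indicator {a..} (a + 1 * y) *\<^sub>R g (a + 1 * y) \<partial>lborel)"
    unfolding set_lebesgue_integral_def by (rule lborel_integral_real_affine) simp
  also have "\<dots> = (\<integral>y. indicator {0..} y * g (a + y) \<partial>lborel)"
    by (simp add: indicator_def)
  finally show ?thesis .
qed

lemma si_G1: "set_integrable lborel {a..} (\<lambda>z. phi z * phi (z - s))"
proof (rule set_integrable_bound[OF integrable_phi])
  fix z show "\<bar>phi z * phi (z - s)\<bar> \<le> phi z"
    using phi_pos[of z] phi_pos[of "z - s"] phi_le_1[of "z - s"] by (simp add: abs_mult mult_left_le)
qed auto

lemma si_G2: "set_integrable lborel {a..} (\<lambda>z. - z * phi z * Phi (z - s) + phi z * phi (z - s))"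
proof (rule set_integrable_bound[OF integrable_phi_poly[of 1 1 0]])
  fix z
  have 1: "\<bar>z * phi z * Phi (z - s)\<bar> \<le> phi z * \<bar>z\<bar>"
    using phi_pos[of z] Phi_nonneg[of "z - s"] Phi_le_1[of "z - s"]
    by (simp add: abs_mult mult_left_le mult.commute mult.left_commute)
  have 2: "\<bar>phi z * phi (z - s)\<bar> \<le> phi z"
    using phi_pos[of z] phi_pos[of "z - s"] phi_le_1[of "z - s"] by (simp add: abs_mult mult_left_le)
  show "\<bar>- z * phi z * Phi (z - s) + phi z * phi (z - s)\<bar> \<le> phi z * (1 + 1 * \<bar>z\<bar> + 0 * z^2)"
    using 1 2 by (simp add: algebra_simps)
qed auto

lemma phi_bound:
  assumes "\<bar>c\<bar> \<le> M"
  shows "phi (c + y) \<le> exp (M^2/2) * exp (- (y^2)/4)"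
proof -
  have "1 \<le> sqrt (2 * pi)" using pi_gt3 by simp
  then have "exp (- ((c + y)^2)/2) / sqrt (2 * pi) \<le> exp (- ((c + y)^2)/2) / 1"
    by (intro divide_left_mono) auto
  then have "phi (c + y) \<le> exp (- ((c + y)^2)/2)"
    unfolding phi_def' by simp
  also have "\<dots> \<le> exp (M^2/2 + - (y^2)/4)"
  proof -
    have "\<bar>c\<bar>^2 \<le> M^2" using assms by (intro power_mono) auto
    then have "c^2 \<le> M^2" by simp
    moreover have "0 \<le> (2 * c + y)^2" by simp
    moreover have "(c + y)^2 = c^2 + 2*c*y + y^2" "(2 * c + y)^2 = 4*c^2 + 4*c*y + y^2"
      by (simp_all add: power2_eq_square algebra_simps)
    ultimately have "- ((c + y)^2)/2 \<le> M^2/2 + - (y^2)/4"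
      by linarith
    then show ?thesis by simp
  qed
  also have "\<dots> = exp (M^2/2) * exp (- (y^2)/4)" by (simp add: exp_add[symmetric])
  finally show ?thesis .
qed

lemma integrable_gauss:
  fixes A B :: real
  shows "integrable lborel (\<lambda>y::real. exp (- (y^2)/4) * (A + B * \<bar>y\<bar>))"
proof -
  have nd: "normal_density 0 (sqrt 2) y = exp (- (y^2)/4) / sqrt (4 * pi)" for y
    by (simp add: normal_density_def power_mult_distrib real_sqrt_mult)
  have m0: "integrable lborel (\<lambda>y. normal_density 0 (sqrt 2) y * \<bar>y - 0\<bar>^0)"
    and m1: "integrable lborel (\<lambda>y. normal_density 0 (sqrt 2) y * \<bar>y - 0\<bar>^1)"
    by (rule integrable_normal_moment_abs, simp)+
  have "integrable lborel (\<lambda>y. (sqrt (4 * pi) * A) * (normal_density 0 (sqrt 2) y * \<bar>y - 0\<bar>^0)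
      + (sqrt (4 * pi) * B) * (normal_density 0 (sqrt 2) y * \<bar>y - 0\<bar>^1))"
    using m0 m1 by auto
  then show ?thesis by (simp add: nd algebra_simps)
qed

definition Ap :: "real \<Rightarrow> real \<Rightarrow> real" where
  "Ap L t = vbz L t / (vbz L t - L)"

lemma abs_le_bound_helper:
  fixes c y \<alpha> Q R M M' :: real
  assumes c: "\<bar>c\<bar> \<le> M" and \<alpha>: "\<bar>\<alpha>\<bar> \<le> M'" and Q: "0 \<le> Q" "Q \<le> 1" and R: "0 \<le> R" "R \<le> 1"
  shows "\<bar>- (c + y) * \<alpha> * Q + R * (\<alpha> - 1)\<bar> \<le> (M + \<bar>y\<bar>) * M' + (M' + 1)"
proof -
  have h1: "\<bar>c + y\<bar> \<le> M + \<bar>y\<bar>" using c abs_triangle_ineq[of c y] by linarith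
  have "\<bar>(c + y) * \<alpha> * Q\<bar> = \<bar>c + y\<bar> * \<bar>\<alpha>\<bar> * Q" using Q by (simp add: abs_mult)
  also have "\<dots> \<le> \<bar>c + y\<bar> * \<bar>\<alpha>\<bar>" using Q by (simp add: mult_left_le)
  also have "\<dots> \<le> (M + \<bar>y\<bar>) * M'" using h1 \<alpha> by (intro mult_mono) auto
  finally have h2: "\<bar>(c + y) * \<alpha> * Q\<bar> \<le> (M + \<bar>y\<bar>) * M'" .
  have "\<bar>R * (\<alpha> - 1)\<bar> = R * \<bar>\<alpha> - 1\<bar>" using R by (simp add: abs_mult)
  also have "\<dots> \<le> \<bar>\<alpha> - 1\<bar>" using R by (simp add: mult_left_le_one_le)
  also have "\<dots> \<le> M' + 1" using \<alpha> by linarith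
  finally have h3: "\<bar>R * (\<alpha> - 1)\<bar> \<le> M' + 1" .
  have "\<bar>- (c + y) * \<alpha> * Q + R * (\<alpha> - 1)\<bar> \<le> \<bar>(c + y) * \<alpha> * Q\<bar> + \<bar>R * (\<alpha> - 1)\<bar>"
    by (metis abs_minus_cancel abs_triangle_ineq minus_mult_left)
  then show ?thesis using h2 h3 by linarith
qed

lemma DERIV_KKz:
  assumes s: "s > 0" and L: "0 < L" "L < 1"
  shows "((\<lambda>t. KK t (zbar L t)) has_real_derivative
          (- (Ap L s * (phi (zbar L s) * Phi (zbar L s - s))) - DD s * (1 - Phi (sqrt 2 * (zbar L s - s/2))))) (at s)"
proof -
  define A where "A = zbar L"
  define A' where "A' = Ap L"
  have contA: "isCont A s" using isCont_zbar[OF s L] by (simp add: A_def)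
  have contA': "isCont A' s" unfolding A'_def Ap_def[abs_def]
    using isCont_vbz[OF s L] vbz_gt_L[OF s L] by (intro continuous_intros) auto
  obtain d1 where d1: "d1 > 0" "\<And>t. \<bar>t - s\<bar> < d1 \<Longrightarrow> \<bar>A t - A s\<bar> < 1"
    using contA[unfolded continuous_at_eps_delta, rule_format, of 1] by (auto simp: dist_real_def)
  obtain d2 where d2: "d2 > 0" "\<And>t. \<bar>t - s\<bar> < d2 \<Longrightarrow> \<bar>A' t - A' s\<bar> < 1"
    using contA'[unfolded continuous_at_eps_delta, rule_format, of 1] by (auto simp: dist_real_def)
  define \<delta> where "\<delta> = min (s/2) (min d1 d2)"
  have \<delta>: "\<delta> > 0" using s d1 d2 by (simp add: \<delta>_def)
  define M where "M = \<bar>A s\<bar> + 1"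
  define M' where "M' = \<bar>A' s\<bar> + 1"
  have near: "t > 0 \<and> \<bar>A t\<bar> \<le> M \<and> \<bar>A' t\<bar> \<le> M'" if "\<bar>t - s\<bar> < \<delta>" for t
  proof -
    have "\<bar>A t - A s\<bar> < 1" "\<bar>A' t - A' s\<bar> < 1" using that d1 d2 by (auto simp: \<delta>_def)
    moreover have "\<bar>t - s\<bar> < s/2" using that by (simp add: \<delta>_def)
    then have "t > 0" unfolding abs_less_iff by linarith
    ultimately show ?thesis by (auto simp: M_def M'_def abs_le_iff abs_less_iff)
  qed
  have M'pos: "M' \<ge> 0" "M \<ge> 0" by (auto simp: M_def M'_def)
  define k where "k t y = indicator {0..} y * (phi (A t + y) * Phi (A t + y - t))" for t y
  define k' where "k' t y = indicator {0..} y * (phi (A t + y) * (- (A t + y) * A' t * Phi (A t + y - t) + phi (A t + y - t) * (A' t - 1)))" for t y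
  define w where "w y = exp (- (y^2)/4) * (exp (M^2/2) * (M * M' + M' + 1) + exp (M^2/2) * M' * \<bar>y\<bar>)" for y
  have KKk: "KK t (A t) = (\<integral>y. k t y \<partial>lborel)" for t
    unfolding KK_def k_def by (subst shift_Ici) (simp add: algebra_simps)
  have D: "((\<lambda>t. \<integral>y. k t y \<partial>lborel) has_real_derivative (\<integral>y. k' s y \<partial>lborel)) (at s)"
  proof (rule DERIV_integral_param[OF \<delta>])
    fix t y assume t: "\<bar>t - s\<bar> < \<delta>"
    then have tpos: "t > 0" using near by blast
    have dA: "(A has_real_derivative A' t) (at t)"
      using DERIV_zbar[OF tpos L] by (simp add: A_def A'_def Ap_def)
    show "((\<lambda>t. k t y) has_real_derivative k' t y) (at t)"
      unfolding k_def k'_def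
      by (auto intro!: derivative_eq_intros dA simp: algebra_simps)
  next
    fix t y assume t: "\<bar>t - s\<bar> < \<delta>"
    have c: "\<bar>A t\<bar> \<le> M" and \<alpha>: "\<bar>A' t\<bar> \<le> M'" using near[OF t] by auto
    have h: "\<bar>- (A t + y) * A' t * Phi (A t + y - t) + phi (A t + y - t) * (A' t - 1)\<bar> \<le> (M + \<bar>y\<bar>) * M' + (M' + 1)"
      by (rule abs_le_bound_helper[OF c \<alpha> Phi_nonneg Phi_le_1 less_imp_le[OF phi_pos] phi_le_1])
    have p: "phi (A t + y) \<le> exp (M^2/2) * exp (- (y^2)/4)" by (rule phi_bound[OF c])
    have "\<bar>k' t y\<bar> \<le> phi (A t + y) * \<bar>- (A t + y) * A' t * Phi (A t + y - t) + phi (A t + y - t) * (A' t - 1)\<bar>"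
      unfolding k'_def using phi_pos[of "A t + y"] by (auto simp: indicator_def abs_mult)
    also have "\<dots> \<le> (exp (M^2/2) * exp (- (y^2)/4)) * ((M + \<bar>y\<bar>) * M' + (M' + 1))"
      using h p phi_pos[of "A t + y"] by (intro mult_mono) auto
    also have "\<dots> = w y" by (simp add: w_def algebra_simps)
    finally show "\<bar>k' t y\<bar> \<le> w y" .
  next
    fix t
    show "k t \<in> borel_measurable lborel" unfolding k_def by measurable
  next
    show "k' s \<in> borel_measurable lborel" unfolding k'_def by measurable
  next
    fix t assume t: "\<bar>t - s\<bar> < \<delta>"
    show "integrable lborel (k t)"
    proof (rule Bochner_Integration.integrable_bound[OF integrable_gauss[of "exp ((\<bar>A t\<bar>)^2/2)" 0]])
      show "k t \<in> borel_measurable lborel" unfolding k_def by measurable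
      show "AE y in lborel. norm (k t y) \<le> norm (exp (- (y^2)/4) * (exp ((\<bar>A t\<bar>)^2/2) + 0 * \<bar>y\<bar>))"
      proof (intro AE_I2)
        fix y
        have p: "phi (A t + y) \<le> exp ((\<bar>A t\<bar>)^2/2) * exp (- (y^2)/4)" by (rule phi_bound) simp
        have "\<bar>k t y\<bar> \<le> phi (A t + y)"
          unfolding k_def using phi_pos[of "A t + y"] Phi_nonneg Phi_le_1
          by (auto simp: indicator_def abs_mult mult_left_le)
        then show "norm (k t y) \<le> norm (exp (- (y^2)/4) * (exp ((\<bar>A t\<bar>)^2/2) + 0 * \<bar>y\<bar>))"
          using p by (simp add: mult.commute)
      qed
    qed
  next
    show "integrable lborel w" unfolding w_def by (rule integrable_gauss)
  qed
  have "(\<lambda>t. KK t (zbar L t)) = (\<lambda>t. \<integral>y. k t y \<partial>lborel)" using KKk by (auto simp: A_def)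
  moreover have "(\<integral>y. k' s y \<partial>lborel)
      = - (Ap L s * (phi (zbar L s) * Phi (zbar L s - s))) - DD s * (1 - Phi (sqrt 2 * (zbar L s - s/2)))"
  proof -
    define a where "a = A s"
    define \<alpha> where "\<alpha> = A' s"
    have "(\<integral>y. k' s y \<partial>lborel) = (LINT z:{a..}|lborel. phi z * (- z * \<alpha> * Phi (z - s) + phi (z - s) * (\<alpha> - 1)))"
      unfolding k'_def by (subst shift_Ici) (simp add: a_def \<alpha>_def algebra_simps)
    also have "\<dots> = (LINT z:{a..}|lborel. \<alpha> * (- z * phi z * Phi (z - s) + phi z * phi (z - s)) - phi z * phi (z - s))"
      by (rule set_lebesgue_integral_cong) (auto simp: algebra_simps)
    also have "\<dots> = \<alpha> * (LINT z:{a..}|lborel. - z * phi z * Phi (z - s) + phi z * phi (z - s))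
                    - (LINT z:{a..}|lborel. phi z * phi (z - s))"
      using si_G1[of a s] si_G2[of a s] by (subst set_integral_diff(2)) auto
    also have "\<dots> = - (\<alpha> * (phi a * Phi (a - s))) - DD s * (1 - Phi (sqrt 2 * (a - s/2)))"
      unfolding G1 G2 by simp
    finally show ?thesis by (simp add: a_def \<alpha>_def A_def A'_def)
  qed
  ultimately show ?thesis using D by simp
qed

definition QQ :: "real \<Rightarrow> real \<Rightarrow> real" where
  "QQ L s = Phi (zbar L s) * ((Phi (zbar L s - s) - L * Phi (zbar L s))
      - (Phi (ln L / s + s/2 - s) - L * Phi (ln L / s + s/2)))
      + (1 - Phi (zbar L s - s) * Phi (zbar L s)) - 2 * KK s (zbar L s)"

lemma DERIV_QQ:
  assumes s: "s > 0" and L: "0 < L" "L < 1"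
  shows "(QQ L has_real_derivative
     (2 * (DD s * (1 - Phi (sqrt 2 * (zbar L s - s/2)))) + L * Phi (zbar L s) * phi (ln L / s + s/2)
      + Ap L s * phi (zbar L s) * (L * Phi (ln L / s + s/2) - Phi (ln L / s + s/2 - s)))) (at s)"
proof -
  define a where "a = zbar L s"
  define lp where "lp = ln L / s + s/2"
  have dA: "(zbar L has_real_derivative Ap L s) (at s)"
    using DERIV_zbar[OF s L] by (simp add: Ap_def)
  have dK: "((\<lambda>t. KK t (zbar L t)) has_real_derivative
          (- (Ap L s * (phi (zbar L s) * Phi (zbar L s - s))) - DD s * (1 - Phi (sqrt 2 * (zbar L s - s/2))))) (at s)"
    by (rule DERIV_KKz[OF s L])
  have Pm: "Phi (zbar L s - s) = L * Phi (zbar L s)"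
    using zbar[OF s L] Phi_pos[of "zbar L s"] by (simp add: rr_def field_simps)
  have flm: "phi (ln L / s + s/2 - s) = L * phi (ln L / s + s/2)"
  proof -
    have "exp (s * (ln L / s + s/2) - s^2/2) = L" using s L by (simp add: field_simps power2_eq_square)
    then show ?thesis using phi_shift[of s "ln L / s + s/2"] by simp
  qed
  define \<alpha> where "\<alpha> = Ap L s"
  define lp' where "lp' = - (ln L / s^2) + 1/2"
  have d1: "((\<lambda>t. Phi (zbar L t)) has_real_derivative phi (zbar L s) * \<alpha>) (at s)"
    unfolding \<alpha>_def by (rule DERIV_Phi_comp[OF dA])
  have d2: "((\<lambda>t. Phi (zbar L t - t)) has_real_derivative phi (zbar L s - s) * (\<alpha> - 1)) (at s)"
    unfolding \<alpha>_def by (intro DERIV_Phi_comp DERIV_diff dA DERIV_ident)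
  have dl: "((\<lambda>t. ln L / t + t/2) has_real_derivative lp') (at s)"
    unfolding lp'_def using s by (auto intro!: derivative_eq_intros simp: power2_eq_square field_simps)
  have d3: "((\<lambda>t. Phi (ln L / t + t/2 - t)) has_real_derivative phi (ln L / s + s/2 - s) * (lp' - 1)) (at s)"
    by (intro DERIV_Phi_comp DERIV_diff dl DERIV_ident)
  have d4: "((\<lambda>t. Phi (ln L / t + t/2)) has_real_derivative phi (ln L / s + s/2) * lp') (at s)"
    by (intro DERIV_Phi_comp dl)
  have D: "(QQ L has_real_derivative
      (phi (zbar L s) * \<alpha>) * ((Phi (zbar L s - s) - L * Phi (zbar L s)) - (Phi (ln L / s + s/2 - s) - L * Phi (ln L / s + s/2)))
      + ((phi (zbar L s - s) * (\<alpha> - 1) - L * (phi (zbar L s) * \<alpha>))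
           - (phi (ln L / s + s/2 - s) * (lp' - 1) - L * (phi (ln L / s + s/2) * lp'))) * Phi (zbar L s)
      + (0 - (phi (zbar L s - s) * (\<alpha> - 1) * Phi (zbar L s) + (phi (zbar L s) * \<alpha>) * Phi (zbar L s - s)))
      - 2 * (- (\<alpha> * (phi (zbar L s) * Phi (zbar L s - s))) - DD s * (1 - Phi (sqrt 2 * (zbar L s - s/2))))) (at s)"
    unfolding QQ_def[abs_def] \<alpha>_def
    by (intro DERIV_add DERIV_diff DERIV_mult DERIV_cmult DERIV_const d1[unfolded \<alpha>_def] d2[unfolded \<alpha>_def] d3 d4 dK)
  show ?thesis
    using D unfolding Pm flm \<alpha>_def[symmetric]
    by (rule DERIV_cong) (simp add: algebra_simps)
qed

lemma PiB_QQ: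
  assumes \<sigma>: "\<sigma> > 0" and T: "T > 0" and L: "0 < L" "L < 1"
  shows "PiB \<sigma> L T = QQ L (\<sigma> * sqrt T)"
  using PiB_eq1[OF \<sigma> T L] by (simp add: QQ_def)

lemma lin_helpers:
  fixes s a :: real assumes s: "s > 0"
  shows "(s * a - s^2/2) / s - s / 2 = a - s" "(s * a - s^2/2) / s + s / 2 = a"
    "sqrt 2 * (s * a - s^2/2) / s = sqrt 2 * (a - s/2)"
  using s by (simp_all add: field_simps power2_eq_square)

lemma eq_alg:
  fixes \<sigma> r a L V P f fl Pl Plm g G e q p :: real
  assumes r: "r > 0" and \<sigma>: "\<sigma> > 0" and q2: "q * q = 2" and q: "q > 0" and p: "p > 0" and V: "V - L \<noteq> 0"
  shows "(L*P) * (\<sigma> / r) * (fl / 2 + (1/(\<sigma>*r))*(a - \<sigma>*r)*f)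
       + \<sigma> * V * f / (2 * r * (V - L)) * (L*Pl - Plm)
       + (1/(2*q)) * (\<sigma> * e / ((q*p) * r)) * (q / (\<sigma>*r) * g + 1 - G)
       + \<sigma> / r * ((1/(\<sigma>*r)) * (e/(2*p)*((\<sigma>*r)/2) - ((a - \<sigma>*r)*f*(L*P) + e/(2*p)*(g/q + (\<sigma>*r)/2*G))))
     = (2*(e/(2*p)*(1 - G)) + L*P*fl + (V/(V - L))*f*(L*Pl - Plm)) * (\<sigma> * (inverse r / 2))"
proof -
  have h: "(1/(2*q)) * (\<sigma> * e / ((q*p) * r)) * (q / (\<sigma>*r) * g + 1 - G)
      = \<sigma> * e * g / (2 * q * p * r * (\<sigma> * r)) + \<sigma> * e * (1 - G) / (4 * p * r)"
  proof -
    have "(1/(2*q)) * (\<sigma> * e / ((q*p) * r)) * (q / (\<sigma>*r) * g + 1 - G)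
       = \<sigma> * e * g / (2 * q * p * r * (\<sigma> * r)) + \<sigma> * e * (1 - G) / (2 * (q * q) * p * r)"
      using q p r \<sigma> by (simp add: field_simps)
    then show ?thesis by (simp add: q2)
  qed
  show ?thesis unfolding h using r \<sigma> q p V by (simp add: field_simps) (simp add: algebra_simps)?
qed

theorem corollary3:
  fixes \<sigma> T L :: real
  assumes "\<sigma> > 0" and "T > 0" and "0 < L" and "L < 1"
  shows "let s = \<sigma> * sqrt T; vb = vlow \<sigma> L T;
             am = ln vb / s - s / 2; ap = ln vb / s + s / 2;
             lm = ln L / s - s / 2; lp = ln L / s + s / 2;
             I0 = Ik s vb 0; I2 = Ik s vb 2
         in PiB \<sigma> L T = 1 - Phi am * Phi ap - 2 / s * I0 + Phi am * Phi lp - Phi ap * Phi lm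
          \<and> (PiB \<sigma> L has_real_derivative
               (Phi am * (\<sigma> / sqrt T) * (phi lp / 2 + (1 / s) * am * phi ap)
                + \<sigma> * vb * phi ap / (2 * sqrt T * (vb - L)) * (L * Phi lp - Phi lm)
                + (1 / (2 * sqrt 2)) * (\<sigma> * exp (- \<sigma>\<^sup>2 * T / 4) / (sqrt (2 * pi) * sqrt T))
                    * (sqrt 2 / s * phi (sqrt 2 * ln vb / s) + 1 - Phi (sqrt 2 * ln vb / s))
                + \<sigma> / sqrt T * (1 / (\<sigma>\<^sup>2 * T) + 1 / 4) * I0
                - \<sigma> / sqrt T * (1 / (\<sigma>\<^sup>2 * T)\<^sup>2) * I2)) (at T)"
proof -
  note \<sigma> = assms(1) and T = assms(2) and L = assms(3,4)
  let ?s = "\<sigma> * sqrt T"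
  let ?a = "zbar L ?s"
  let ?lp = "ln L / ?s + ?s / 2"
  let ?V = "vlow \<sigma> L T"
  have spos: "?s > 0" using \<sigma> T by simp
  have V: "?V = exp (?s * ?a - ?s^2/2)" using vlow_eq[OF \<sigma> T L] .
  have lnV: "ln ?V = ?s * ?a - ?s^2/2" using V by simp
  have am: "ln ?V / ?s - ?s / 2 = ?a - ?s"
    unfolding lnV by (rule lin_helpers(1)[OF spos])
  have ap: "ln ?V / ?s + ?s / 2 = ?a"
    unfolding lnV by (rule lin_helpers(2)[OF spos])
  have lm: "ln L / ?s - ?s / 2 = ?lp - ?s" by simp
  have r2: "sqrt 2 * ln ?V / ?s = sqrt 2 * (?a - ?s/2)"
    unfolding lnV by (rule lin_helpers(3)[OF spos])
  have sq: "\<sigma>\<^sup>2 * T = ?s^2" using T by (simp add: power_mult_distrib)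
  have I0: "Ik ?s ?V 0 = ?s * KK ?s ?a"
    unfolding V Ik_eq[OF spos] by (simp add: KK_def)
  have Pm: "Phi (?a - ?s) = L * Phi ?a"
    using zbar[OF spos L] Phi_pos[of ?a] by (simp add: rr_def field_simps)
  define G3v where "G3v = DD ?s * (?s/2) - ((?a - ?s) * phi ?a * Phi (?a - ?s)
        + DD ?s * (phi (sqrt 2 * (?a - ?s/2)) / sqrt 2 + ?s/2 * Phi (sqrt 2 * (?a - ?s/2))))"
  have Ic: "(1 / ?s^2 + 1/4) * Ik ?s ?V 0 - (1 / ?s^2)^2 * Ik ?s ?V 2 = (1/?s) * G3v"
    unfolding V I_comb[OF spos] G3[OF spos] G3v_def ..
  have Ic': "\<sigma> / sqrt T * (1 / (\<sigma>\<^sup>2 * T) + 1 / 4) * Ik ?s ?V 0 - \<sigma> / sqrt T * (1 / (\<sigma>\<^sup>2 * T)\<^sup>2) * Ik ?s ?V 2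
      = \<sigma> / sqrt T * ((1/?s) * G3v)"
    unfolding sq Ic[symmetric] by (simp add: algebra_simps power_one_over)
  have PiB1: "PiB \<sigma> L T = 1 - Phi (?a - ?s) * Phi ?a - 2 / ?s * Ik ?s ?V 0 + Phi (?a - ?s) * Phi ?lp - Phi ?a * Phi (?lp - ?s)"
    unfolding PiB_QQ[OF \<sigma> T L] QQ_def I0 Pm using spos \<sigma> T by (simp add: algebra_simps)
  define Dss where "Dss = 2 * (DD ?s * (1 - Phi (sqrt 2 * (?a - ?s/2)))) + L * Phi ?a * phi ?lp
      + Ap L ?s * phi ?a * (L * Phi ?lp - Phi (?lp - ?s))"
  have dQ: "((\<lambda>t. QQ L (\<sigma> * sqrt t)) has_real_derivative Dss * (\<sigma> * (inverse (sqrt T) / 2))) (at T)"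
    unfolding Dss_def
    by (rule DERIV_chain2[where f = "QQ L" and g = "\<lambda>t. \<sigma> * sqrt t", OF DERIV_QQ[OF spos L]])
       (use T in \<open>auto intro!: derivative_eq_intros\<close>)
  have ev: "\<forall>\<^sub>F t in nhds T. PiB \<sigma> L t = QQ L (\<sigma> * sqrt t)"
    using eventually_nhds_in_open[of "{0<..}" T] T
    by (auto elim!: eventually_mono simp: PiB_QQ[OF \<sigma> _ L])
  have dP: "(PiB \<sigma> L has_real_derivative Dss * (\<sigma> * (inverse (sqrt T) / 2))) (at T)"
    using dQ by (subst DERIV_cong_ev[OF refl ev refl])
  have eqD: "Phi (?a - ?s) * (\<sigma> / sqrt T) * (phi ?lp / 2 + (1 / ?s) * (?a - ?s) * phi ?a)
                + \<sigma> * ?V * phi ?a / (2 * sqrt T * (?V - L)) * (L * Phi ?lp - Phi (?lp - ?s))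
                + (1 / (2 * sqrt 2)) * (\<sigma> * exp (- \<sigma>\<^sup>2 * T / 4) / (sqrt (2 * pi) * sqrt T))
                    * (sqrt 2 / ?s * phi (sqrt 2 * (?a - ?s/2)) + 1 - Phi (sqrt 2 * (?a - ?s/2)))
                + \<sigma> / sqrt T * (1 / (\<sigma>\<^sup>2 * T) + 1 / 4) * Ik ?s ?V 0
                - \<sigma> / sqrt T * (1 / (\<sigma>\<^sup>2 * T)\<^sup>2) * Ik ?s ?V 2
        = Dss * (\<sigma> * (inverse (sqrt T) / 2))"
  proof -
    have ex: "exp (- \<sigma>\<^sup>2 * T / 4) = exp (- (?s^2)/4)"
    proof -
      have "- \<sigma>\<^sup>2 * T / 4 = - (?s^2)/4" using sq by simp
      then show ?thesis by simp
    qed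
    have sp: "sqrt (2 * pi) = sqrt 2 * sqrt pi" by (simp add: real_sqrt_mult)
    have ApV: "Ap L ?s = ?V / (?V - L)" by (simp add: Ap_def vbz_def V)
    have VL: "?V - L \<noteq> 0" using vbz_gt_L[OF spos L] V by (simp add: vbz_def)
    have EA: "(L * Phi ?a) * (\<sigma> / sqrt T) * (phi ?lp / 2 + (1/(\<sigma> * sqrt T)) * (?a - \<sigma> * sqrt T) * phi ?a)
       + \<sigma> * ?V * phi ?a / (2 * sqrt T * (?V - L)) * (L * Phi ?lp - Phi (?lp - ?s))
       + (1/(2 * sqrt 2)) * (\<sigma> * exp (- (?s^2)/4) / ((sqrt 2 * sqrt pi) * sqrt T))
           * (sqrt 2 / (\<sigma> * sqrt T) * phi (sqrt 2 * (?a - ?s/2)) + 1 - Phi (sqrt 2 * (?a - ?s/2)))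
       + \<sigma> / sqrt T * ((1/(\<sigma> * sqrt T)) * (exp (- (?s^2)/4) / (2 * sqrt pi) * ((\<sigma> * sqrt T)/2)
           - ((?a - \<sigma> * sqrt T) * phi ?a * (L * Phi ?a)
              + exp (- (?s^2)/4) / (2 * sqrt pi) * (phi (sqrt 2 * (?a - ?s/2)) / sqrt 2
                 + (\<sigma> * sqrt T)/2 * Phi (sqrt 2 * (?a - ?s/2))))))
     = (2 * (exp (- (?s^2)/4) / (2 * sqrt pi) * (1 - Phi (sqrt 2 * (?a - ?s/2)))) + L * Phi ?a * phi ?lp
        + (?V / (?V - L)) * phi ?a * (L * Phi ?lp - Phi (?lp - ?s))) * (\<sigma> * (inverse (sqrt T) / 2))"
      by (rule eq_alg) (use T \<sigma> VL in auto)
    let ?A = "Phi (?a - ?s) * (\<sigma> / sqrt T) * (phi ?lp / 2 + (1 / ?s) * (?a - ?s) * phi ?a)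
                + \<sigma> * ?V * phi ?a / (2 * sqrt T * (?V - L)) * (L * Phi ?lp - Phi (?lp - ?s))
                + (1 / (2 * sqrt 2)) * (\<sigma> * exp (- \<sigma>\<^sup>2 * T / 4) / (sqrt (2 * pi) * sqrt T))
                    * (sqrt 2 / ?s * phi (sqrt 2 * (?a - ?s/2)) + 1 - Phi (sqrt 2 * (?a - ?s/2)))"
    have "?A + \<sigma> / sqrt T * (1 / (\<sigma>\<^sup>2 * T) + 1 / 4) * Ik ?s ?V 0
                - \<sigma> / sqrt T * (1 / (\<sigma>\<^sup>2 * T)\<^sup>2) * Ik ?s ?V 2
        = ?A + (\<sigma> / sqrt T * (1 / (\<sigma>\<^sup>2 * T) + 1 / 4) * Ik ?s ?V 0
                - \<sigma> / sqrt T * (1 / (\<sigma>\<^sup>2 * T)\<^sup>2) * Ik ?s ?V 2)"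
      by (simp only: add_diff_eq)
    also have "\<dots> = ?A + \<sigma> / sqrt T * ((1/?s) * G3v)"
      by (rule arg_cong[where f = "\<lambda>x. ?A + x"], rule Ic')
    also have "\<dots> = Dss * (\<sigma> * (inverse (sqrt T) / 2))"
      using EA unfolding Pm ex sp G3v_def DD_def Dss_def ApV .
    finally show ?thesis .
  qed
  have C2: "(PiB \<sigma> L has_real_derivative
               (Phi (?a - ?s) * (\<sigma> / sqrt T) * (phi ?lp / 2 + (1 / ?s) * (?a - ?s) * phi ?a)
                + \<sigma> * ?V * phi ?a / (2 * sqrt T * (?V - L)) * (L * Phi ?lp - Phi (?lp - ?s))
                + (1 / (2 * sqrt 2)) * (\<sigma> * exp (- \<sigma>\<^sup>2 * T / 4) / (sqrt (2 * pi) * sqrt T))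
                    * (sqrt 2 / ?s * phi (sqrt 2 * (?a - ?s/2)) + 1 - Phi (sqrt 2 * (?a - ?s/2)))
                + \<sigma> / sqrt T * (1 / (\<sigma>\<^sup>2 * T) + 1 / 4) * Ik ?s ?V 0
                - \<sigma> / sqrt T * (1 / (\<sigma>\<^sup>2 * T)\<^sup>2) * Ik ?s ?V 2)) (at T)"
    using DERIV_cong[OF dP eqD[symmetric]] .
  show ?thesis
    unfolding Let_def am ap lm r2
    using PiB1 C2 by (rule conjI)
qed


end
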